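(* Let $K\in\mathbb N$, $p_1,\dots,p_K>0$ with $\sum_k p_k=1$, $\sigma_1^2,\dots,\sigma_K^2>0$, and $h\sim\sum_{k=1}^K p_k\mathcal N_{\mathbb C}(0,\sigma_k^2)$. For $M\in\mathbb N$ and $\mathbf a\in\mathbb C^M$ with $\|\mathbf a\|_2^2=M$, consider the noiseless one-bit observation $\mathbf r=Q(\mathbf a h)\in\mathbb C^M$, where $Q(x)=\frac1{\sqrt2}(\operatorname{sign}(\operatorname{Re}x)+\mathrm j\operatorname{sign}(\operatorname{Im}x))$ is applied element-wise. Then the mean square error $\mathbb E[|h-\mathbb E[h\mid\mathbf r]|^2]$ of the conditional mean estimator is minimized by the pilot sequence $[\mathbf a]_m=\exp(\mathrm j\psi_m)$ with equidistant phase shifts $\psi_m=\frac{\pi(m-1)}{2M}$, $m=1,\dots,M$.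
   Context: $\mathcal N_{\mathbb C}(0,\sigma^2)$ denotes the circularly symmetric complex Gaussian distribution with variance $\sigma^2$. The minimization is over the pilot vectors $\mathbf a$ satisfying the power constraint. *)

theory Defs
  imports "HOL-Probability.Probability"
begin

definition Qsign :: "complex \<Rightarrow> complex" where
  "Qsign x = (complex_of_real (sgn (Re x)) + \<i> * complex_of_real (sgn (Im x)))
             / complex_of_real (sqrt 2)"

text \<open>Density (w.r.t. Lebesgue measure on the complex plane) of the Gaussian mixture
  sum_k p_k CN(0, s2_k); CN(0,s) has density exp(-|z|^2/s)/(pi s).\<close>
definition gm_density :: "nat \<Rightarrow> (nat \<Rightarrow> real) \<Rightarrow> (nat \<Rightarrow> real) \<Rightarrow> complex \<Rightarrow> real" where
  "gm_density K p s2 z = (\<Sum>k<K. p k * exp (- ((cmod z)^2 / s2 k)) / (pi * s2 k))"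

definition gm_measure :: "nat \<Rightarrow> (nat \<Rightarrow> real) \<Rightarrow> (nat \<Rightarrow> real) \<Rightarrow> complex measure" where
  "gm_measure K p s2 = density lborel (\<lambda>z. ennreal (gm_density K p s2 z))"

text \<open>Observation r = Q(a h) in C^M; vectors in C^M are functions nat => complex with
  entries indexed 0..M-1 (entries outside are fixed to 0).\<close>
definition obs :: "nat \<Rightarrow> (nat \<Rightarrow> complex) \<Rightarrow> complex \<Rightarrow> (nat \<Rightarrow> complex)" where
  "obs M a z = (\<lambda>m. if m < M then Qsign (a m * z) else 0)"

definition cme :: "complex measure \<Rightarrow> nat \<Rightarrow> (nat \<Rightarrow> complex) \<Rightarrow> (nat \<Rightarrow> complex) \<Rightarrow> complex" where
  "cme \<mu> M a v = (LINT z|\<mu>. indicator {z. obs M a z = v} z *\<^sub>R z)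
                   / complex_of_real (measure \<mu> {z. obs M a z = v})"

definition mse :: "complex measure \<Rightarrow> nat \<Rightarrow> (nat \<Rightarrow> complex) \<Rightarrow> real" where
  "mse \<mu> M a = (LINT z|\<mu>. (cmod (z - cme \<mu> M a (obs M a z)))^2)"

text \<open>Equidistant-phase pilot; 0-based index m corresponds to paper index m+1,
  so psi = pi * m / (2M).\<close>
definition equi_pilot :: "nat \<Rightarrow> nat \<Rightarrow> complex" where
  "equi_pilot M m = exp (\<i> * complex_of_real (pi * real m / (2 * real M)))"

end

theory Submission
  imports Defs
begin

definition c2v :: "complex \<Rightarrow> real^2" where
  "c2v z = (\<chi> k. if k = 1 then Re z else Im z)"
definition v2c :: "real^2 \<Rightarrow> complex" where
  "v2c v = Complex (v $ 1) (v $ 2)"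

lemma v2c_c2v[simp]: "v2c (c2v z) = z"
  by (simp add: v2c_def c2v_def complex_eq_iff)
lemma c2v_v2c[simp]: "c2v (v2c v) = v"
  by (simp add: v2c_def c2v_def vec_eq_iff forall_2)

lemma linear_v2c: "linear v2c"
  by (rule linearI) (auto simp: v2c_def complex_eq_iff)
lemma linear_c2v: "linear c2v"
  by (rule linearI) (auto simp: c2v_def vec_eq_iff)

lemma v2c_meas[measurable]: "v2c \<in> borel_measurable borel"
  by (intro borel_measurable_continuous_onI linear_continuous_on linear_conv_bounded_linear[THEN iffD1] linear_v2c)
lemma c2v_meas[measurable]: "c2v \<in> borel_measurable borel"
  by (intro borel_measurable_continuous_onI linear_continuous_on linear_conv_bounded_linear[THEN iffD1] linear_c2v)

lemma lborel_complex_v2c: "(lborel :: complex measure) = distr lborel borel v2c"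
proof (rule lborel_eqI)
  fix l u :: complex
  assume le: "\<And>b. b \<in> Basis \<Longrightarrow> l \<bullet> b \<le> u \<bullet> b"
  have pre: "v2c -` box l u = box (c2v l) (c2v u)"
  proof -
    have 1: "z \<in> box l u \<longleftrightarrow> Re l < Re z \<and> Re z < Re u \<and> Im l < Im z \<and> Im z < Im u" for z
      by (auto simp: mem_box Basis_complex_def)
    have 2: "x \<in> box (c2v l) (c2v u) \<longleftrightarrow> Re l < x$1 \<and> x$1 < Re u \<and> Im l < x$2 \<and> x$2 < Im u" for x
      by (auto simp: mem_box_cart forall_2 c2v_def)
    show ?thesis by (auto simp: 1 2 v2c_def)
  qed
  have le2: "\<forall>i. c2v l $ i \<le> c2v u $ i"
    using le[of 1] le[of \<i>] by (auto simp: c2v_def forall_2 Basis_complex_def)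
  have p: "(\<Prod>b\<in>Basis. (c2v u - c2v l) \<bullet> b) = (\<Prod>i\<in>UNIV. (c2v u - c2v l) $ i)"
    by (simp add: Basis_vec_def cart_eq_inner_axis axis_eq_axis prod.UNION_disjoint)
  have p2: "(\<Prod>b\<in>Basis. (c2v u - c2v l) \<bullet> b) = (Re u - Re l) * (Im u - Im l)"
    unfolding p by (simp add: UNIV_2 c2v_def)
  have "emeasure lborel (box (c2v l) (c2v u)) = (\<Prod>b\<in>Basis. (c2v u - c2v l) \<bullet> b)"
    by (rule emeasure_lborel_box) (use le2 in \<open>auto simp: Basis_vec_def cart_eq_inner_axis\<close>)
  then show "emeasure (distr lborel borel v2c) (box l u) = ennreal (prod ((\<bullet>) (u - l)) Basis)"
    by (simp add: emeasure_distr pre p2 Basis_complex_def)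
qed simp

lemma norm_c2v: "norm (c2v z) = cmod z"
  by (simp add: norm_vec_def L2_set_def UNIV_2 c2v_def cmod_def)

lemma orth_rot: "orthogonal_transformation (\<lambda>v. c2v (cis t * v2c v))"
  unfolding orthogonal_transformation
proof (intro conjI allI)
  show "linear (\<lambda>v. c2v (cis t * v2c v))"
    by (rule linearI) (simp_all add: linear_add[OF linear_v2c] linear_add[OF linear_c2v]
        linear_scale[OF linear_v2c] linear_scale[OF linear_c2v] distrib_left)
  fix v
  have "v2c v = z \<Longrightarrow> v = c2v z" for z by (metis c2v_v2c)
  then show "norm (c2v (cis t * v2c v)) = norm v"
    by (metis norm_c2v norm_mult norm_cis mult_1 c2v_v2c)
qed

lemma emeasure_lborel_eq_lebesgue:
  "X \<in> sets borel \<Longrightarrow> emeasure lborel X = emeasure lebesgue X"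
  by simp

lemma lborel_rot: "distr lborel borel (\<lambda>z::complex. cis t * z) = lborel"
proof (rule lborel_eqI[symmetric])
  fix l u :: complex
  assume le: "\<And>b. b \<in> Basis \<Longrightarrow> l \<bullet> b \<le> u \<bullet> b"
  define R where "R = (\<lambda>v. c2v (cis (-t) * v2c v))"
  define S where "S = v2c -` box l u"
  have Sb: "S \<in> sets borel"
    using measurable_sets_borel[OF v2c_meas, of "box l u"] by (simp add: S_def)
  have Sl: "S \<in> lmeasurable"
  proof -
    have "S \<in> sets lborel" using Sb by simp
    moreover have "emeasure lborel S < \<infinity>"
      unfolding S_def using emeasure_distr[of v2c lborel borel "box l u"]
      using emeasure_bounded_finite[of "box l u"] by (simp add: lborel_complex_v2c[symmetric])
    ultimately show ?thesis
      by (metis fmeasurableI emeasure_completion main_part sets_completionI_sets)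
  qed
  have oR: "orthogonal_transformation R" unfolding R_def by (rule orth_rot)
  have eqset: "v2c -` ((\<lambda>z. cis t * z) -` box l u) = R ` S"
  proof (intro set_eqI iffI)
    fix v assume "v \<in> v2c -` ((\<lambda>z. cis t * z) -` box l u)"
    then have "c2v (cis t * v2c v) \<in> S" by (simp add: S_def)
    moreover have "R (c2v (cis t * v2c v)) = v"
      by (simp add: R_def mult.assoc[symmetric] cis_mult)
    ultimately show "v \<in> R ` S" by (metis image_eqI)
  next
    fix v assume "v \<in> R ` S"
    then obtain w where "w \<in> S" "v = R w" by auto
    then show "v \<in> v2c -` ((\<lambda>z. cis t * z) -` box l u)"
      by (simp add: S_def R_def mult.assoc[symmetric] cis_mult)
  qed
  have rm: "(\<lambda>z. cis t * z) \<in> borel_measurable borel"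
    by (intro borel_measurable_continuous_onI continuous_intros)
  have Y: "(\<lambda>z. cis t * z) -` box l u \<in> sets borel"
    using rm by (rule measurable_sets_borel) simp
  have X: "v2c -` ((\<lambda>z. cis t * z) -` box l u) \<in> sets borel"
    using Y by (rule measurable_sets_borel[OF v2c_meas])
  have "emeasure (distr lborel borel (\<lambda>z. cis t * z)) (box l u) = emeasure lborel ((\<lambda>z. cis t * z) -` box l u)"
    using rm by (simp add: emeasure_distr)
  also have "\<dots> = emeasure lborel (v2c -` ((\<lambda>z. cis t * z) -` box l u))"
    by (subst lborel_complex_v2c) (simp add: emeasure_distr Y)
  also have "\<dots> = emeasure lebesgue (R ` S)"
    using X eqset by simp
  also have "\<dots> = measure lebesgue (R ` S)"
    using measurable_orthogonal_image[OF oR Sl] by (simp add: emeasure_eq_measure2)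
  also have "\<dots> = measure lebesgue S"
    using measure_orthogonal_image[OF oR Sl] by simp
  also have "\<dots> = emeasure lebesgue S"
    using Sl by (simp add: emeasure_eq_measure2)
  also have "\<dots> = emeasure lborel S" using Sb by simp
  also have "\<dots> = emeasure lborel (box l u)"
    unfolding S_def using emeasure_distr[of v2c lborel borel "box l u"]
    by (simp add: lborel_complex_v2c[symmetric])
  also have "\<dots> = (\<Prod>b\<in>Basis. (u - l) \<bullet> b)"
    using le by simp
  finally show "emeasure (distr lborel borel (\<lambda>z. cis t * z)) (box l u) = (\<Prod>b\<in>Basis. (u - l) \<bullet> b)" .
qed simp

lemma integrable_gauss1: "sg > 0 \<Longrightarrow> integrable lborel (\<lambda>(x::real). exp (- x\<^sup>2 / (2 * sg)))"
proof -
  assume sg: "sg > 0"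
  have "integrable lborel (\<lambda>x. sqrt (2 * pi * (sqrt sg)\<^sup>2) * normal_density 0 (sqrt sg) x)"
    using integrable_normal_density[of "sqrt sg" 0] sg by simp
  moreover have "sqrt (2 * pi * (sqrt sg)\<^sup>2) * normal_density 0 (sqrt sg) x = exp (- x\<^sup>2 / (2 * sg))" for x
    using sg by (simp add: normal_density_def)
  ultimately show ?thesis by simp
qed

lemma integrable_gauss2: "sg > 0 \<Longrightarrow> integrable lborel (\<lambda>(z::complex). exp (- (cmod z)\<^sup>2 / (2 * sg)))"
proof -
  assume sg: "sg > 0"
  interpret P: product_sigma_finite "\<lambda>_::complex. lborel :: real measure" by standard
  have i: "integrable (Pi\<^sub>M (Basis :: complex set) (\<lambda>_. lborel)) (\<lambda>x. \<Prod>b\<in>Basis. exp (- (x b)\<^sup>2 / (2 * sg)))"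
    using P.product_integrable_prod[where f="\<lambda>_ y. exp (- y\<^sup>2 / (2 * sg))" and I="Basis :: complex set"]
      integrable_gauss1[OF sg] by simp
  have eq: "exp (- (cmod (\<Sum>b\<in>Basis. x b *\<^sub>R b))\<^sup>2 / (2 * sg)) = (\<Prod>b\<in>Basis. exp (- (x b)\<^sup>2 / (2 * sg)))" for x :: "complex \<Rightarrow> real"
    by (simp add: Basis_complex_def cmod_power2 exp_add[symmetric] add_divide_distrib diff_divide_distrib)
  have "integrable (distr (Pi\<^sub>M Basis (\<lambda>_. lborel)) borel (\<lambda>f. \<Sum>b\<in>Basis. f b *\<^sub>R b)) (\<lambda>(z::complex). exp (- (cmod z)\<^sup>2 / (2 * sg)))"
  proof (rule integrable_distr_eq[THEN iffD2])
    show "integrable (Pi\<^sub>M (Basis::complex set) (\<lambda>_. lborel)) (\<lambda>x. exp (- (cmod (\<Sum>b\<in>Basis. x b *\<^sub>R b))\<^sup>2 / (2 * sg)))"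
      unfolding eq by (rule i)
  qed simp_all
  then show ?thesis by (simp add: lborel_eq[symmetric])
qed

lemma integrable_gauss_mom: "sg > 0 \<Longrightarrow> integrable lborel (\<lambda>(z::complex). (cmod z)\<^sup>2 * exp (- (cmod z)\<^sup>2 / sg))"
proof -
  assume sg: "sg > 0"
  show ?thesis
  proof (rule Bochner_Integration.integrable_bound)
    show "integrable lborel (\<lambda>(z::complex). 2 * sg * exp (- (cmod z)\<^sup>2 / (2 * sg)))"
      using integrable_gauss2[OF sg] by simp
    show "(\<lambda>(z::complex). (cmod z)\<^sup>2 * exp (- (cmod z)\<^sup>2 / sg)) \<in> borel_measurable lborel" by simp
    show "AE z in lborel. norm ((cmod z)\<^sup>2 * exp (- (cmod z)\<^sup>2 / sg)) \<le> norm (2 * sg * exp (- (cmod z)\<^sup>2 / (2 * sg)))"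
    proof (intro AE_I2)
      fix z :: complex
      define t where "t = (cmod z)\<^sup>2 / (2 * sg)"
      have t0: "t \<ge> 0" using sg by (simp add: t_def)
      have "t \<le> exp t" using exp_ge_add_one_self[of t] by linarith
      then have "t * exp (-t) \<le> 1" by (simp add: exp_minus field_simps)
      then have "t * exp (-t) * exp (-t) \<le> 1 * exp (-t)"
        by (rule mult_right_mono) simp
      then have "2 * sg * (t * exp (-t) * exp (-t)) \<le> 2 * sg * exp (-t)"
        using sg by simp
      moreover have "(cmod z)\<^sup>2 * exp (- (cmod z)\<^sup>2 / sg) = 2 * sg * (t * exp (-t) * exp (-t))"
        using sg by (simp add: t_def exp_add[symmetric] field_simps)
      moreover have "- (cmod z)\<^sup>2 / (2 * sg) = -t" by (simp add: t_def)
      ultimately show "norm ((cmod z)\<^sup>2 * exp (- (cmod z)\<^sup>2 / sg)) \<le> norm (2 * sg * exp (- (cmod z)\<^sup>2 / (2 * sg)))"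
        using sg t0 by simp
    qed
  qed
qed

lemma integrable_gauss0: "sg > 0 \<Longrightarrow> integrable lborel (\<lambda>(z::complex). exp (- (cmod z)\<^sup>2 / sg))"
  using integrable_gauss2[of "sg/2"] by simp

locale rotmeas =
  fixes \<mu> :: "complex measure"
  assumes sets_mu: "sets \<mu> = sets borel"
    and fin: "emeasure \<mu> (space \<mu>) \<noteq> \<infinity>"
    and rot: "\<And>t. distr \<mu> \<mu> (\<lambda>z. cis t * z) = \<mu>"
    and null_line: "\<And>w. w \<noteq> 0 \<Longrightarrow> {z. Im (cnj w * z) = 0} \<in> null_sets \<mu>"
    and int2: "integrable \<mu> (\<lambda>z. (cmod z)\<^sup>2)"

lemma null_line_lborel:
  assumes "w \<noteq> 0"
  shows "{z::complex. Im (cnj w * z) = 0} \<in> null_sets lborel"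
proof -
  have eq: "{z::complex. Im (cnj w * z) = 0} = {z. (\<i> * w) \<bullet> z = 0}"
    by (auto simp: inner_complex_def algebra_simps)
  have "negligible {z::complex. (\<i> * w) \<bullet> z = 0}"
    using assms by (intro negligible_hyperplane) simp
  then have "{z::complex. Im (cnj w * z) = 0} \<in> null_sets lebesgue"
    unfolding eq using negligible_iff_null_sets by blast
  moreover have "{z::complex. Im (cnj w * z) = 0} \<in> sets borel"
    by measurable
  ultimately show ?thesis
    by (simp add: null_sets_completion_iff)
qed

lemma rotmeas_density:
  fixes g :: "complex \<Rightarrow> real"
  assumes gm[measurable]: "g \<in> borel_measurable borel"
    and g0: "\<And>z. g z \<ge> 0"
    and grad: "\<And>t z. g (cis t * z) = g z"
    and gi: "integrable lborel g"
    and g2: "integrable lborel (\<lambda>z. g z * (cmod z)\<^sup>2)"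
  shows "rotmeas (density lborel (\<lambda>z. ennreal (g z)))"
proof
  let ?\<mu> = "density lborel (\<lambda>z. ennreal (g z))"
  show "sets ?\<mu> = sets borel" by simp
  have "emeasure ?\<mu> (space ?\<mu>) = (\<integral>\<^sup>+ z. ennreal (g z) \<partial>lborel)"
    by (simp add: emeasure_density)
  also have "\<dots> < \<infinity>"
    using gi g0 by (simp add: integrable_iff_bounded)
  finally show "emeasure ?\<mu> (space ?\<mu>) \<noteq> \<infinity>" by simp
  fix t :: real
  have rm[measurable]: "(\<lambda>z::complex. cis t * z) \<in> borel_measurable borel"
    by (intro borel_measurable_continuous_onI continuous_intros)
  show "distr ?\<mu> ?\<mu> (\<lambda>z. cis t * z) = ?\<mu>"
  proof (rule measure_eqI)
    show "sets (distr ?\<mu> ?\<mu> (\<lambda>z. cis t * z)) = sets ?\<mu>" by simp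
    fix A assume "A \<in> sets (distr ?\<mu> ?\<mu> (\<lambda>z. cis t * z))"
    then have A[measurable]: "A \<in> sets borel" by simp
    have "emeasure (distr ?\<mu> ?\<mu> (\<lambda>z. cis t * z)) A = emeasure ?\<mu> ((\<lambda>z. cis t * z) -` A)"
      by (simp add: emeasure_distr)
    also have "\<dots> = (\<integral>\<^sup>+ z. ennreal (g z) * indicator ((\<lambda>z. cis t * z) -` A) z \<partial>lborel)"
      by (subst emeasure_density) (auto intro: measurable_sets_borel[OF rm A])
    also have "\<dots> = (\<integral>\<^sup>+ z. (\<lambda>y. ennreal (g y) * indicator A y) (cis t * z) \<partial>lborel)"
      by (simp add: grad indicator_def)
    also have "\<dots> = (\<integral>\<^sup>+ y. ennreal (g y) * indicator A y \<partial>distr lborel borel (\<lambda>z. cis t * z))"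
      by (subst nn_integral_distr) simp_all
    also have "\<dots> = emeasure ?\<mu> A"
      by (simp add: lborel_rot emeasure_density)
    finally show "emeasure (distr ?\<mu> ?\<mu> (\<lambda>z. cis t * z)) A = emeasure ?\<mu> A" .
  qed
next
  fix w :: complex assume "w \<noteq> 0"
  then have N: "{z::complex. Im (cnj w * z) = 0} \<in> null_sets lborel" by (rule null_line_lborel)
  show "{z. Im (cnj w * z) = 0} \<in> null_sets (density lborel (\<lambda>z. ennreal (g z)))"
    using N by (subst null_sets_density_iff) (auto dest: AE_not_in)
next
  show "integrable (density lborel (\<lambda>z. ennreal (g z))) (\<lambda>z. (cmod z)\<^sup>2)"
    using g2 g0 by (subst integrable_density) simp_all
qed

lemma gm_density_rad: "gm_density K p s2 (cis t * z) = gm_density K p s2 z"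
  by (simp add: gm_density_def norm_mult)

lemma gm_rotmeas:
  assumes p: "\<forall>k<K. p k > 0" and s: "\<forall>k<K. s2 k > 0"
  shows "rotmeas (gm_measure K p s2)"
  unfolding gm_measure_def
proof (rule rotmeas_density)
  show "gm_density K p s2 \<in> borel_measurable borel"
    unfolding gm_density_def by measurable
  show "0 \<le> gm_density K p s2 z" for z
    unfolding gm_density_def using p s by (intro sum_nonneg) (auto intro!: divide_nonneg_pos)
  show "gm_density K p s2 (cis t * z) = gm_density K p s2 z" for t z by (rule gm_density_rad)
  have "integrable lborel (\<lambda>z. \<Sum>k<K. p k / (pi * s2 k) * exp (- (cmod z)\<^sup>2 / s2 k))"
  proof (rule Bochner_Integration.integrable_sum)
    fix k assume "k \<in> {..<K}"
    then have "s2 k > 0" using s by auto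
    then show "integrable lborel (\<lambda>z. p k / (pi * s2 k) * exp (- (cmod z)\<^sup>2 / s2 k))"
      by (intro integrable_mult_right integrable_gauss0)
  qed
  moreover have "(\<lambda>z. \<Sum>k<K. p k / (pi * s2 k) * exp (- (cmod z)\<^sup>2 / s2 k)) = gm_density K p s2"
    unfolding gm_density_def by (auto simp: fun_eq_iff)
  ultimately show "integrable lborel (gm_density K p s2)" by simp
  have I2: "integrable lborel (\<lambda>z. \<Sum>k<K. p k / (pi * s2 k) * ((cmod z)\<^sup>2 * exp (- ((cmod z)\<^sup>2 / s2 k))))"
    using s by (intro Bochner_Integration.integrable_sum integrable_mult_right) (auto intro: integrable_gauss_mom[simplified])
  show "integrable lborel (\<lambda>z. gm_density K p s2 z * (cmod z)\<^sup>2)"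
  proof (rule Bochner_Integration.integrable_cong[THEN iffD1, OF refl _ I2])
    show "(\<Sum>k<K. p k / (pi * s2 k) * ((cmod z)\<^sup>2 * exp (- ((cmod z)\<^sup>2 / s2 k)))) = gm_density K p s2 z * (cmod z)\<^sup>2" for z
      unfolding gm_density_def by (simp add: sum_distrib_left sum_distrib_right mult_ac)
  qed
qed

definition imr :: "real \<Rightarrow> complex \<Rightarrow> real" where
  "imr c z = Im (cnj (cis c) * z)"

lemma imr_meas[measurable]: "imr c \<in> borel_measurable borel"
  unfolding imr_def by measurable

definition sect :: "real \<Rightarrow> real \<Rightarrow> complex set" where
  "sect \<alpha> \<beta> = {z. 0 < imr \<alpha> z \<and> imr \<beta> z < 0}"

definition line :: "real \<Rightarrow> complex set" where
  "line \<gamma> = {z. imr \<gamma> z = 0}"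

lemma sect_borel[measurable]: "sect \<alpha> \<beta> \<in> sets borel"
  unfolding sect_def by measurable

lemma line_borel[measurable]: "line \<gamma> \<in> sets borel"
  unfolding line_def by measurable

lemma polar_ex: "\<exists>\<theta>. t0 \<le> \<theta> \<and> \<theta> < t0 + 2 * pi \<and> z = complex_of_real (cmod z) * cis \<theta>"
proof -
  define w where "w = z * cis (- t0)"
  define A where "A = Arg2pi w"
  have A: "0 \<le> A" "A < 2 * pi" "is_Arg w A" using Arg2pi[of w] by (auto simp: A_def)
  have nw: "cmod w = cmod z" by (simp add: w_def norm_mult)
  have wA: "w = complex_of_real (cmod z) * cis A"
    using A(3) nw by (simp add: is_Arg_def cis_conv_exp)
  have "z = z * (cis (- t0) * cis t0)" by (simp add: cis_mult)
  also have "\<dots> = w * cis t0" by (simp add: w_def mult.assoc)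
  also have "\<dots> = complex_of_real (cmod z) * cis (t0 + A)"
    using wA by (simp add: mult.assoc cis_mult add.commute)
  finally have "z = complex_of_real (cmod z) * cis (t0 + A)" .
  then show ?thesis using A by (intro exI[of _ "t0 + A"]) auto
qed

lemma Im_rot_polar: "imr \<alpha> (complex_of_real r * cis \<theta>) = r * sin (\<theta> - \<alpha>)"
  by (simp add: imr_def sin_diff algebra_simps)

lemma sin_pos_range: "sin x > 0 \<Longrightarrow> 0 \<le> x \<Longrightarrow> x < 2 * pi \<Longrightarrow> x < pi \<and> 0 < x"
  by (metis linorder_not_le order_le_less sin_zero sin_le_zero not_less)

lemma sin_neg_range: "sin x < 0 \<Longrightarrow> - pi < x \<Longrightarrow> x < pi \<Longrightarrow> x < 0"
  by (meson linorder_not_le order_less_imp_le sin_ge_zero)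

lemma sin_neg_of: "- pi < x \<Longrightarrow> x < 0 \<Longrightarrow> sin x < 0"
  using sin_gt_zero[of "-x"] by simp

lemma polar_in_sect:
  assumes "\<beta> - \<alpha> \<le> pi" "\<alpha> < \<theta>" "\<theta> < \<beta>" "r > 0"
  shows "complex_of_real r * cis \<theta> \<in> sect \<alpha> \<beta>"
  unfolding sect_def mem_Collect_eq Im_rot_polar using assms
  by (auto intro!: mult_pos_pos sin_gt_zero mult_pos_neg sin_neg_of)

lemma sect_polar:
  assumes "z \<in> sect \<alpha> \<beta>" "\<alpha> < \<beta>" "\<beta> - \<alpha> \<le> pi"
  obtains \<theta> where "\<alpha> < \<theta>" "\<theta> < \<beta>" "z = complex_of_real (cmod z) * cis \<theta>" "cmod z > 0"
proof -
  obtain \<theta> where th: "\<alpha> \<le> \<theta>" "\<theta> < \<alpha> + 2 * pi" "z = complex_of_real (cmod z) * cis \<theta>"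
    using polar_ex[of \<alpha> z] by auto
  have z0: "z \<noteq> 0" using assms(1) by (auto simp: sect_def imr_def)
  then have r: "cmod z > 0" by simp
  have "0 < imr \<alpha> z" using assms(1) by (simp add: sect_def)
  moreover have "imr \<alpha> z = imr \<alpha> (complex_of_real (cmod z) * cis \<theta>)"
    using th(3) by (rule arg_cong)
  ultimately have "0 < cmod z * sin (\<theta> - \<alpha>)" unfolding Im_rot_polar by simp
  then have s1: "sin (\<theta> - \<alpha>) > 0" using r by (simp add: zero_less_mult_iff)
  have a1: "\<theta> - \<alpha> < pi" "0 < \<theta> - \<alpha>" using sin_pos_range[OF s1] th by auto
  have "imr \<beta> z < 0" using assms(1) by (simp add: sect_def)
  moreover have "imr \<beta> z = imr \<beta> (complex_of_real (cmod z) * cis \<theta>)"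
    using th(3) by (rule arg_cong)
  ultimately have "cmod z * sin (\<theta> - \<beta>) < 0" unfolding Im_rot_polar by simp
  then have s2: "sin (\<theta> - \<beta>) < 0" using r by (simp add: mult_less_0_iff)
  have "\<theta> - \<beta> < 0" using sin_neg_range[OF s2] a1 assms by auto
  then show ?thesis using that[of \<theta>] a1 th r by auto
qed

lemma sect_rot: "(\<lambda>z. cis t * z) -` sect (\<alpha> + t) (\<beta> + t) = sect \<alpha> \<beta>"
proof -
  have "imr (x + t) (cis t * z) = imr x z" for x z
  proof -
    have e: "cis (- (x + t)) * cis t = cis (- x)" by (simp add: cis_mult)
    have "cnj (cis (x + t)) * (cis t * z) = (cis (- (x + t)) * cis t) * z"
      by (simp only: cis_cnj mult.assoc)
    also have "\<dots> = cnj (cis x) * z" by (simp only: e cis_cnj)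
    finally have "cnj (cis (x + t)) * (cis t * z) = cnj (cis x) * z" .
    then show ?thesis unfolding imr_def by (rule arg_cong)
  qed
  then show ?thesis by (auto simp: sect_def)
qed

lemma sect_mono:
  assumes "\<alpha> \<le> \<alpha>'" "\<beta>' \<le> \<beta>" "\<alpha>' < \<beta>'" "\<beta> - \<alpha> \<le> pi"
  shows "sect \<alpha>' \<beta>' \<subseteq> sect \<alpha> \<beta>"
proof
  fix z assume "z \<in> sect \<alpha>' \<beta>'"
  then obtain \<theta> where "\<alpha>' < \<theta>" "\<theta> < \<beta>'" "z = complex_of_real (cmod z) * cis \<theta>" "cmod z > 0"
    using sect_polar assms by (metis diff_mono order_trans)
  then show "z \<in> sect \<alpha> \<beta>" using polar_in_sect[of \<beta> \<alpha> \<theta> "cmod z"] assms by auto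
qed

lemma sect_split:
  assumes "\<alpha> < \<gamma>" "\<gamma> < \<beta>" "\<beta> - \<alpha> \<le> pi"
  shows "sect \<alpha> \<gamma> \<inter> sect \<gamma> \<beta> = {}"
    and "sect \<alpha> \<gamma> \<subseteq> sect \<alpha> \<beta>" "sect \<gamma> \<beta> \<subseteq> sect \<alpha> \<beta>"
    and "sect \<alpha> \<beta> \<subseteq> sect \<alpha> \<gamma> \<union> sect \<gamma> \<beta> \<union> line \<gamma>"
proof -
  show "sect \<alpha> \<gamma> \<inter> sect \<gamma> \<beta> = {}" by (auto simp: sect_def)
  show "sect \<alpha> \<gamma> \<subseteq> sect \<alpha> \<beta>" using assms by (intro sect_mono) auto
  show "sect \<gamma> \<beta> \<subseteq> sect \<alpha> \<beta>" using assms by (intro sect_mono) auto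
  show "sect \<alpha> \<beta> \<subseteq> sect \<alpha> \<gamma> \<union> sect \<gamma> \<beta> \<union> line \<gamma>"
    by (auto simp: sect_def line_def)
qed

lemma sect_empty: "sect \<alpha> \<alpha> = {}"
  by (auto simp: sect_def)

context rotmeas
begin

lemma sets_mu'[measurable_cong]: "sets \<mu> = sets borel" by (rule sets_mu)

lemma space_mu[simp]: "space \<mu> = UNIV"
  using sets_eq_imp_space_eq[OF sets_mu] by simp

sublocale finite_measure \<mu>
  using fin by (rule finite_measureI)

lemma int1: "integrable \<mu> (\<lambda>z. z)"
proof (rule Bochner_Integration.integrable_bound)
  show "integrable \<mu> (\<lambda>z. 1 + (cmod z)\<^sup>2)" using int2 by simp
  show "(\<lambda>z. z) \<in> borel_measurable \<mu>" by simp
  show "AE z in \<mu>. norm z \<le> norm (1 + (cmod z)\<^sup>2)"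
  proof (intro AE_I2)
    fix z :: complex
    have "0 \<le> (cmod z - 1)\<^sup>2" "0 \<le> (cmod z)\<^sup>2" by simp_all
    then have a: "2 * cmod z \<le> 1 + cmod z * cmod z" "0 \<le> cmod z * cmod z"
      by (simp_all add: power2_eq_square algebra_simps)
    then have "cmod z \<le> 1 + cmod z * cmod z" by linarith
    then have "cmod z \<le> 1 + (cmod z)\<^sup>2" by (simp add: power2_eq_square)
    then show "norm z \<le> norm (1 + (cmod z)\<^sup>2)" by simp
  qed
qed

lemma int_ind[simp, intro]: "A \<in> sets borel \<Longrightarrow> integrable \<mu> (indicator A :: complex \<Rightarrow> real)"
  using emeasure_finite[of A] by (intro integrable_real_indicator) (simp_all add: less_top[symmetric] sets_mu)

lemma rot_meas: "(\<lambda>z. cis t * z) \<in> measurable \<mu> \<mu>"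
  by (simp add: measurable_cong_sets[OF sets_mu sets_mu])

lemma rot_integral:
  fixes f :: "complex \<Rightarrow> 'b::{banach,second_countable_topology}"
  assumes [measurable]: "f \<in> borel_measurable borel"
  shows "(\<integral>z. f (cis t * z) \<partial>\<mu>) = (\<integral>z. f z \<partial>\<mu>)"
proof -
  have "(\<integral>z. f z \<partial>\<mu>) = (\<integral>z. f z \<partial>distr \<mu> \<mu> (\<lambda>z. cis t * z))" by (simp add: rot)
  also have "\<dots> = (\<integral>z. f (cis t * z) \<partial>\<mu>)"
    by (rule integral_distr) (simp_all add: rot_meas measurable_cong_sets[OF sets_mu])
  finally show ?thesis by simp
qed

lemma rot_measure:
  assumes "A \<in> sets borel"
  shows "measure \<mu> ((\<lambda>z. cis t * z) -` A) = measure \<mu> A"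
proof -
  have "measure \<mu> A = measure (distr \<mu> \<mu> (\<lambda>z. cis t * z)) A" by (simp add: rot)
  also have "\<dots> = measure \<mu> ((\<lambda>z. cis t * z) -` A)"
    using assms by (subst measure_distr) (simp_all add: rot_meas sets_mu)
  finally show ?thesis by simp
qed

lemma line_null: "line \<gamma> \<in> null_sets \<mu>"
  using null_line[of "cis \<gamma>"] by (simp add: line_def imr_def)

definition GS :: "complex set \<Rightarrow> complex" where
  "GS S = (LINT z|\<mu>. indicator S z *\<^sub>R z)"

lemma sect_rot_measure: "measure \<mu> (sect (\<alpha> + t) (\<beta> + t)) = measure \<mu> (sect \<alpha> \<beta>)"
  using rot_measure[of "sect (\<alpha> + t) (\<beta> + t)" t] by (simp add: sect_rot)

lemma sect_rot_GS: "GS (sect (\<alpha> + t) (\<beta> + t)) = cis t * GS (sect \<alpha> \<beta>)"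
proof -
  have "GS (sect (\<alpha> + t) (\<beta> + t)) = (LINT z|\<mu>. indicator (sect (\<alpha> + t) (\<beta> + t)) (cis t * z) *\<^sub>R (cis t * z))"
    unfolding GS_def by (rule rot_integral[symmetric]) simp
  also have "\<dots> = (LINT z|\<mu>. cis t * (indicator (sect \<alpha> \<beta>) z *\<^sub>R z))"
  proof (rule Bochner_Integration.integral_cong[OF refl])
    fix z
    have "indicator (sect (\<alpha> + t) (\<beta> + t)) (cis t * z) = (indicator (sect \<alpha> \<beta>) z :: real)"
      using sect_rot[of t \<alpha> \<beta>] by (auto simp: indicator_def)
    then show "indicator (sect (\<alpha> + t) (\<beta> + t)) (cis t * z) *\<^sub>R (cis t * z) = cis t * (indicator (sect \<alpha> \<beta>) z *\<^sub>R z)"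
      by simp
  qed
  also have "\<dots> = cis t * GS (sect \<alpha> \<beta>)"
    unfolding GS_def by (rule integral_mult_right_zero)
  finally show ?thesis .
qed

lemma sect_add:
  assumes "\<alpha> < \<gamma>" "\<gamma> < \<beta>" "\<beta> - \<alpha> \<le> pi"
  shows "measure \<mu> (sect \<alpha> \<beta>) = measure \<mu> (sect \<alpha> \<gamma>) + measure \<mu> (sect \<gamma> \<beta>)"
    and "GS (sect \<alpha> \<beta>) = GS (sect \<alpha> \<gamma>) + GS (sect \<gamma> \<beta>)"
proof -
  note sp = sect_split[OF assms]
  have ae: "AE z in \<mu>. indicator (sect \<alpha> \<beta>) z = (indicator (sect \<alpha> \<gamma>) z + indicator (sect \<gamma> \<beta>) z :: real)"
  proof (rule AE_I'[OF line_null])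
    show "{z \<in> space \<mu>. \<not> indicator (sect \<alpha> \<beta>) z = (indicator (sect \<alpha> \<gamma>) z + indicator (sect \<gamma> \<beta>) z :: real)} \<subseteq> line \<gamma>"
      using sp by (auto simp: indicator_def)
  qed
  have "measure \<mu> (sect \<alpha> \<beta>) = (LINT z|\<mu>. indicator (sect \<alpha> \<beta>) z)" by simp
  also have "\<dots> = (LINT z|\<mu>. indicator (sect \<alpha> \<gamma>) z + indicator (sect \<gamma> \<beta>) z)"
    by (rule integral_cong_AE) (simp_all add: ae)
  also have "\<dots> = measure \<mu> (sect \<alpha> \<gamma>) + measure \<mu> (sect \<gamma> \<beta>)"
    by (subst Bochner_Integration.integral_add) auto
  finally show "measure \<mu> (sect \<alpha> \<beta>) = measure \<mu> (sect \<alpha> \<gamma>) + measure \<mu> (sect \<gamma> \<beta>)" .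
  have "GS (sect \<alpha> \<beta>) = (LINT z|\<mu>. indicator (sect \<alpha> \<gamma>) z *\<^sub>R z + indicator (sect \<gamma> \<beta>) z *\<^sub>R z)"
    unfolding GS_def
    by (rule integral_cong_AE) (use ae in \<open>auto simp: scaleR_add_left[symmetric] elim!: AE_mp\<close>)
  also have "\<dots> = GS (sect \<alpha> \<gamma>) + GS (sect \<gamma> \<beta>)"
    unfolding GS_def
    by (rule Bochner_Integration.integral_add) (auto intro!: integrable_mult_indicator int1)
  finally show "GS (sect \<alpha> \<beta>) = GS (sect \<alpha> \<gamma>) + GS (sect \<gamma> \<beta>)" .
qed

definition mw :: "real \<Rightarrow> real" where "mw w = measure \<mu> (sect 0 w)"
definition Gw :: "real \<Rightarrow> complex" where "Gw w = GS (sect 0 w)"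

lemma sect_mw: "measure \<mu> (sect \<alpha> (\<alpha> + w)) = mw w"
  using sect_rot_measure[of 0 \<alpha> w] by (simp add: mw_def add.commute)

lemma sect_Gw: "GS (sect \<alpha> (\<alpha> + w)) = cis \<alpha> * Gw w"
  using sect_rot_GS[of 0 \<alpha> w] by (simp add: Gw_def add.commute)

lemma mw_add: "0 < w1 \<Longrightarrow> 0 < w2 \<Longrightarrow> w1 + w2 \<le> pi \<Longrightarrow> mw (w1 + w2) = mw w1 + mw w2"
  using sect_add(1)[of 0 w1 "w1 + w2"] sect_mw[of w1 w2] by (simp add: mw_def)

lemma Gw_add: "0 < w1 \<Longrightarrow> 0 < w2 \<Longrightarrow> w1 + w2 \<le> pi \<Longrightarrow> Gw (w1 + w2) = Gw w1 + cis w1 * Gw w2"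
  using sect_add(2)[of 0 w1 "w1 + w2"] sect_Gw[of w1 w2] by (simp add: Gw_def)

lemma Gw_formula:
  assumes "0 < w" "w \<le> pi / 2"
  shows "Gw w * (1 - \<i>) = Gw (pi/2) * (1 - cis w)"
proof -
  have "Gw (w + pi/2) = Gw w + cis w * Gw (pi/2)"
    using assms by (intro Gw_add) auto
  moreover have "Gw (pi/2 + w) = Gw (pi/2) + cis (pi/2) * Gw w"
    using assms by (intro Gw_add) auto
  moreover have "cis (pi/2) = \<i>" by (simp add: complex_eq_iff)
  ultimately have "Gw w + cis w * Gw (pi/2) = Gw (pi/2) + \<i> * Gw w"
    by (simp add: add.commute)
  then show ?thesis by (simp add: algebra_simps)
qed

lemma mw_nonneg: "mw w \<ge> 0" by (simp add: mw_def)

lemma mw_zero: "mw 0 = 0" by (simp add: mw_def sect_empty)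

lemma mw_mono: "0 < w \<Longrightarrow> w \<le> w' \<Longrightarrow> w' \<le> pi \<Longrightarrow> mw w \<le> mw w'"
  unfolding mw_def by (intro finite_measure_mono sect_mono) auto

lemma mw_mult: "0 < d \<Longrightarrow> real k * d \<le> pi \<Longrightarrow> mw (real k * d) = real k * mw d"
proof (induction k)
  case 0 then show ?case by (simp add: mw_zero)
next
  case (Suc k)
  show ?case
  proof (cases "k = 0")
    case True then show ?thesis by simp
  next
    case False
    then have "real k * d \<le> pi" using Suc.prems
      by (smt (verit, best) mult_right_mono of_nat_0_le_iff of_nat_Suc)
    then have "mw (real k * d) = real k * mw d" using Suc by simp
    moreover have "mw (real k * d + d) = mw (real k * d) + mw d"
      using Suc.prems False by (intro mw_add) (auto simp: algebra_simps)
    ultimately show ?thesis by (simp add: algebra_simps)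
  qed
qed

lemma mw_linear:
  assumes "0 < w" "w \<le> pi / 2"
  shows "mw w = (2 * w / pi) * mw (pi/2)"
proof -
  let ?c = "mw (pi/2)"
  have bound: "\<bar>mw w - (2 * w / pi) * ?c\<bar> \<le> ?c / real n" if n: "n \<ge> 1" for n :: nat
  proof -
    define d where "d = pi / (2 * real n)"
    have d0: "d > 0" using n by (simp add: d_def)
    have hc: "?c = real n * mw d"
    proof -
      have e: "real n * d = pi/2" using n by (simp add: d_def)
      have "mw (real n * d) = real n * mw d" by (rule mw_mult[OF d0]) (use e pi_gt_zero in linarith)
      then show ?thesis using e by metis
    qed
    define k where "k = nat \<lfloor>w / d\<rfloor>"
    have kd: "real k * d \<le> w" "w < (real k + 1) * d"
    proof -
      have "0 \<le> w / d" using assms d0 by simp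
      then have "real k = of_int \<lfloor>w / d\<rfloor>" by (simp add: k_def)
      moreover have "of_int \<lfloor>w / d\<rfloor> \<le> w / d" "w / d < of_int \<lfloor>w / d\<rfloor> + 1" by linarith+
      then have "of_int \<lfloor>w / d\<rfloor> * d \<le> w" "w < (of_int \<lfloor>w / d\<rfloor> + 1) * d"
        using d0 by (simp_all only: pos_le_divide_eq pos_divide_less_eq)
      ultimately show "real k * d \<le> w" "w < (real k + 1) * d" by simp_all
    qed
    have kn: "real k \<le> real n"
    proof -
      have "real n * d = pi/2" using n by (simp add: d_def)
      then have "real k * d \<le> real n * d" using kd(1) assms(2) by linarith
      then show ?thesis using d0 by simp
    qed
    have lo: "real k * mw d \<le> mw w"
    proof (cases "k = 0")
      case True then show ?thesis by (simp add: mw_nonneg)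
    next
      case False
      then have "0 < real k * d" using d0 by simp
      then show ?thesis using mw_mult[of d k] mw_mono[of "real k * d" w] kd assms d0 by simp
    qed
    have hi: "mw w \<le> (real k + 1) * mw d"
    proof -
      have "(real k + 1) * d \<le> pi"
      proof -
        have "(real k + 1) * d \<le> (real n + real n) * d" using kn n d0 by (intro mult_right_mono) auto
        then show ?thesis using n by (simp add: d_def field_simps)
      qed
      then show ?thesis using mw_mult[of d "Suc k"] mw_mono[of w "(real k + 1) * d"] kd assms d0
        by (simp add: add.commute)
    qed
    have a1: "2 * w / pi = w / (real n * d)" using n by (simp add: d_def field_simps)
    have "real k / real n \<le> 2 * w / pi" "2 * w / pi \<le> (real k + 1) / real n"
      using kd d0 n unfolding a1 by (simp_all add: field_simps)
    then have "(real k / real n) * ?c \<le> (2 * w / pi) * ?c" "(2 * w / pi) * ?c \<le> ((real k + 1) / real n) * ?c"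
      by (simp_all only: mult_right_mono mw_nonneg)
    moreover have "(real k / real n) * ?c = real k * mw d" "((real k + 1) / real n) * ?c = (real k + 1) * mw d"
      using n hc by simp_all
    ultimately have x1: "real k * mw d \<le> (2 * w / pi) * ?c" "(2 * w / pi) * ?c \<le> (real k + 1) * mw d"
      by simp_all
    have "\<bar>mw w - (2 * w / pi) * ?c\<bar> \<le> mw d"
      using x1 lo hi by (simp add: abs_le_iff algebra_simps)
    moreover have "mw d = ?c / real n" using hc n by simp
    ultimately show ?thesis by simp
  qed
  show ?thesis
  proof (rule ccontr)
    assume ne: "mw w \<noteq> (2 * w / pi) * ?c"
    define e where "e = \<bar>mw w - (2 * w / pi) * ?c\<bar>"
    have e0: "e > 0" using ne by (simp add: e_def)
    obtain n :: nat where n: "n > ?c / e" using reals_Archimedean2 by blast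
    then have n1: "n \<ge> 1" using e0 mw_nonneg[of "pi/2"]
      by (metis divide_nonneg_pos le_less_trans less_one not_le of_nat_0 of_nat_less_iff order.strict_iff_not)
    have "e \<le> ?c / real n" using bound[OF n1] by (simp add: e_def)
    then have "e * real n \<le> ?c" using n1 by (simp add: field_simps)
    moreover have "?c < real n * e" using n e0 by (simp add: field_simps)
    ultimately show False by (simp add: mult.commute)
  qed
qed

end

lemma cmod_diff_sq: "(cmod (z - c))\<^sup>2 = (cmod z)\<^sup>2 - 2 * Re (cnj c * z) + (cmod c)\<^sup>2"
  unfolding cmod_power2 by (simp add: algebra_simps power2_eq_square)

context rotmeas
begin

lemma GS_null: "S \<in> sets borel \<Longrightarrow> measure \<mu> S = 0 \<Longrightarrow> GS S = 0"
proof -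
  assume S: "S \<in> sets borel" and m: "measure \<mu> S = 0"
  have Sm[measurable]: "S \<in> sets \<mu>" using S by (simp add: sets_mu)
  have "S \<in> null_sets \<mu>" using m by (intro null_setsI) (simp_all add: emeasure_eq_measure)
  then have "AE z in \<mu>. indicator S z *\<^sub>R z = (0::complex)"
    by (rule AE_I') (auto simp: indicator_def)
  then show "GS S = 0" unfolding GS_def by (subst integral_cong_AE[where g="\<lambda>_. 0"]) simp_all
qed

lemma cell_expand:
  assumes S: "S \<in> sets borel"
  shows "(LINT z|\<mu>. indicator S z * (cmod (z - c))\<^sup>2)
       = (LINT z|\<mu>. indicator S z * (cmod z)\<^sup>2) - 2 * Re (cnj c * GS S) + (cmod c)\<^sup>2 * measure \<mu> S"
proof -
  have i1: "integrable \<mu> (\<lambda>z. indicator S z * (cmod z)\<^sup>2)"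
    using integrable_real_mult_indicator[OF _ int2, of S] S by (simp add: sets_mu mult.commute)
  have i2: "integrable \<mu> (\<lambda>z. indicator S z *\<^sub>R z)"
    using S by (intro integrable_mult_indicator int1) (simp add: sets_mu)
  have i2': "integrable \<mu> (\<lambda>z. cnj c * (indicator S z *\<^sub>R z))"
    by (rule integrable_mult_right[OF i2])
  have i3: "integrable \<mu> (\<lambda>z. Re (cnj c * (indicator S z *\<^sub>R z)))"
    by (rule integrable_Re[OF i2'])
  have pw: "indicator S z * (cmod (z - c))\<^sup>2
      = indicator S z * (cmod z)\<^sup>2 - 2 * Re (cnj c * (indicator S z *\<^sub>R z)) + (cmod c)\<^sup>2 * indicator S z" for z
    by (simp add: cmod_diff_sq indicator_def)
  have "(LINT z|\<mu>. indicator S z * (cmod (z - c))\<^sup>2)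
      = (LINT z|\<mu>. indicator S z * (cmod z)\<^sup>2 - 2 * Re (cnj c * (indicator S z *\<^sub>R z)) + (cmod c)\<^sup>2 * indicator S z)"
    by (simp only: pw)
  also have "\<dots> = (LINT z|\<mu>. indicator S z * (cmod z)\<^sup>2) - 2 * (LINT z|\<mu>. Re (cnj c * (indicator S z *\<^sub>R z)))
      + (cmod c)\<^sup>2 * (LINT z|\<mu>. indicator S z)"
    using i1 i3 S by (simp add: Bochner_Integration.integral_add Bochner_Integration.integral_diff)
  also have "(LINT z|\<mu>. Re (cnj c * (indicator S z *\<^sub>R z))) = Re (cnj c * GS S)"
  proof -
    have "(LINT z|\<mu>. Re (cnj c * (indicator S z *\<^sub>R z))) = Re (LINT z|\<mu>. cnj c * (indicator S z *\<^sub>R z))"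
      by (rule integral_bounded_linear[OF bounded_linear_Re i2'])
    also have "\<dots> = Re (cnj c * GS S)" unfolding GS_def by (simp only: integral_mult_right_zero)
    finally show ?thesis .
  qed
  also have "(LINT z|\<mu>. indicator S z) = measure \<mu> S" using S by (simp add: sets_mu)
  finally show ?thesis .
qed

lemma cell_bound:
  assumes S: "S \<in> sets borel"
  shows "(LINT z|\<mu>. indicator S z * (cmod z)\<^sup>2) - (cmod (GS S))\<^sup>2 / measure \<mu> S
       \<le> (LINT z|\<mu>. indicator S z * (cmod (z - c))\<^sup>2)"
proof (cases "measure \<mu> S = 0")
  case True
  then show ?thesis using cell_expand[OF S, of c] GS_null[OF S] by simp
next
  case False
  define m where "m = measure \<mu> S"
  define G where "G = GS S"
  have m0: "m > 0" using False by (simp add: m_def zero_less_measure_iff)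
  have "0 \<le> (cmod (of_real m * c - G))\<^sup>2 / m" using m0 by simp
  also have "(cmod (of_real m * c - G))\<^sup>2 = m\<^sup>2 * (cmod c)\<^sup>2 - 2 * m * Re (cnj c * G) + (cmod G)\<^sup>2"
    unfolding cmod_power2 by (simp add: algebra_simps power2_eq_square)
  finally have "0 \<le> (m\<^sup>2 * (cmod c)\<^sup>2 - 2 * m * Re (cnj c * G) + (cmod G)\<^sup>2) / m" .
  then have "0 \<le> m * (cmod c)\<^sup>2 - 2 * Re (cnj c * G) + (cmod G)\<^sup>2 / m"
    using m0 by (simp add: add_divide_distrib diff_divide_distrib power2_eq_square)
  then show ?thesis using cell_expand[OF S, of c] by (simp add: m_def G_def algebra_simps)
qed

lemma cell_eq:
  assumes S: "S \<in> sets borel"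
  shows "(LINT z|\<mu>. indicator S z * (cmod (z - GS S / of_real (measure \<mu> S)))\<^sup>2)
       = (LINT z|\<mu>. indicator S z * (cmod z)\<^sup>2) - (cmod (GS S))\<^sup>2 / measure \<mu> S"
proof (cases "measure \<mu> S = 0")
  case True
  then show ?thesis using cell_expand[OF S, of 0] GS_null[OF S] by simp
next
  case False
  define m where "m = measure \<mu> S"
  define G where "G = GS S"
  have m0: "m > 0" using False by (simp add: m_def zero_less_measure_iff)
  have a: "Re (cnj (G / of_real m) * G) = (cmod G)\<^sup>2 / m"
    unfolding cmod_power2 by (simp add: power2_eq_square add_divide_distrib)
  have b: "(cmod (G / of_real m))\<^sup>2 * m = (cmod G)\<^sup>2 / m"
    using m0 by (simp add: norm_divide power2_eq_square field_simps)
  have e: "(LINT z|\<mu>. indicator S z * (cmod (z - G / of_real m))\<^sup>2)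
      = (LINT z|\<mu>. indicator S z * (cmod z)\<^sup>2) - 2 * Re (cnj (G / of_real m) * G) + (cmod (G / of_real m))\<^sup>2 * m"
    using cell_expand[OF S, of "G / of_real m"] unfolding m_def G_def .
  show ?thesis using e a b unfolding m_def G_def by linarith
qed

lemma partition_integral:
  fixes f :: "complex \<Rightarrow> real"
  assumes I: "finite I" and Sb: "\<And>i. i \<in> I \<Longrightarrow> S i \<in> sets borel"
    and dj: "\<And>i j. i \<in> I \<Longrightarrow> j \<in> I \<Longrightarrow> i \<noteq> j \<Longrightarrow> S i \<inter> S j = {}"
    and N: "N \<in> null_sets \<mu>" and cov: "\<And>z. z \<notin> N \<Longrightarrow> \<exists>i\<in>I. z \<in> S i"
    and f: "integrable \<mu> f"
  shows "integral\<^sup>L \<mu> f = (\<Sum>i\<in>I. LINT z|\<mu>. indicator (S i) z * f z)"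
proof -
  have "AE z in \<mu>. f z = (\<Sum>i\<in>I. indicator (S i) z * f z)"
  proof (rule AE_I'[OF N], safe)
    fix z assume z: "f z \<noteq> (\<Sum>i\<in>I. indicator (S i) z * f z)"
    show "z \<in> N"
    proof (rule ccontr)
      assume "z \<notin> N"
      then obtain i where i: "i \<in> I" "z \<in> S i" using cov by blast
      have "(\<Sum>j\<in>I. indicator (S j) z * f z) = indicator (S i) z * f z + (\<Sum>j\<in>I - {i}. indicator (S j) z * f z)"
        by (rule sum.remove[OF I i(1)])
      also have "(\<Sum>j\<in>I - {i}. indicator (S j) z * f z) = 0"
        using dj i by (intro sum.neutral) (auto simp: indicator_def)
      finally show False using z i by simp
    qed
  qed
  then have "integral\<^sup>L \<mu> f = (LINT z|\<mu>. (\<Sum>i\<in>I. indicator (S i) z * f z))"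
    using f Sb by (intro integral_cong_AE) (auto simp: sets_mu)
  also have "\<dots> = (\<Sum>i\<in>I. LINT z|\<mu>. indicator (S i) z * f z)"
    using f Sb by (intro Bochner_Integration.integral_sum)
       (auto simp: mult.commute[of "indicator _ _"] intro!: integrable_real_mult_indicator simp: sets_mu)
  finally show ?thesis .
qed

definition Phi :: "complex set \<Rightarrow> real" where
  "Phi S = (cmod (GS S))\<^sup>2 / measure \<mu> S"

lemma mse_lower:
  assumes I: "finite I" and Sb: "\<And>i. i \<in> I \<Longrightarrow> S i \<in> sets borel"
    and dj: "\<And>i j. i \<in> I \<Longrightarrow> j \<in> I \<Longrightarrow> i \<noteq> j \<Longrightarrow> S i \<inter> S j = {}"
    and N: "N \<in> null_sets \<mu>" and cov: "\<And>z. z \<notin> N \<Longrightarrow> \<exists>i\<in>I. z \<in> S i"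
    and gi: "integrable \<mu> (\<lambda>z. (cmod (z - g z))\<^sup>2)"
    and gc: "\<And>i z. i \<in> I \<Longrightarrow> z \<in> S i \<Longrightarrow> g z = c i"
  shows "(LINT z|\<mu>. (cmod z)\<^sup>2) - (\<Sum>i\<in>I. Phi (S i)) \<le> (LINT z|\<mu>. (cmod (z - g z))\<^sup>2)"
proof -
  have "(LINT z|\<mu>. (cmod z)\<^sup>2) - (\<Sum>i\<in>I. Phi (S i))
      = (\<Sum>i\<in>I. (LINT z|\<mu>. indicator (S i) z * (cmod z)\<^sup>2) - Phi (S i))"
    using partition_integral[OF I Sb dj N cov int2] by (simp add: sum_subtractf)
  also have "\<dots> \<le> (\<Sum>i\<in>I. LINT z|\<mu>. indicator (S i) z * (cmod (z - c i))\<^sup>2)"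
    using cell_bound Sb unfolding Phi_def by (intro sum_mono) auto
  also have "\<dots> = (\<Sum>i\<in>I. LINT z|\<mu>. indicator (S i) z * (cmod (z - g z))\<^sup>2)"
    using gc by (intro sum.cong refl Bochner_Integration.integral_cong) (auto simp: indicator_def)
  also have "\<dots> = (LINT z|\<mu>. (cmod (z - g z))\<^sup>2)"
    using partition_integral[OF I Sb dj N cov gi] by simp
  finally show ?thesis .
qed

lemma mse_eq:
  assumes I: "finite I" and Sb: "\<And>i. i \<in> I \<Longrightarrow> S i \<in> sets borel"
    and dj: "\<And>i j. i \<in> I \<Longrightarrow> j \<in> I \<Longrightarrow> i \<noteq> j \<Longrightarrow> S i \<inter> S j = {}"
    and N: "N \<in> null_sets \<mu>" and cov: "\<And>z. z \<notin> N \<Longrightarrow> \<exists>i\<in>I. z \<in> S i"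
    and gi: "integrable \<mu> (\<lambda>z. (cmod (z - g z))\<^sup>2)"
    and gc: "\<And>i z. i \<in> I \<Longrightarrow> z \<in> S i \<Longrightarrow> g z = GS (S i) / of_real (measure \<mu> (S i))"
  shows "(LINT z|\<mu>. (cmod (z - g z))\<^sup>2) = (LINT z|\<mu>. (cmod z)\<^sup>2) - (\<Sum>i\<in>I. Phi (S i))"
proof -
  have "(LINT z|\<mu>. (cmod z)\<^sup>2) - (\<Sum>i\<in>I. Phi (S i))
      = (\<Sum>i\<in>I. (LINT z|\<mu>. indicator (S i) z * (cmod z)\<^sup>2) - Phi (S i))"
    using partition_integral[OF I Sb dj N cov int2] by (simp add: sum_subtractf)
  also have "\<dots> = (\<Sum>i\<in>I. LINT z|\<mu>. indicator (S i) z * (cmod (z - GS (S i) / of_real (measure \<mu> (S i))))\<^sup>2)"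
    using cell_eq Sb unfolding Phi_def by (intro sum.cong) auto
  also have "\<dots> = (\<Sum>i\<in>I. LINT z|\<mu>. indicator (S i) z * (cmod (z - g z))\<^sup>2)"
    using gc by (intro sum.cong refl Bochner_Integration.integral_cong) (auto simp: indicator_def)
  also have "\<dots> = (LINT z|\<mu>. (cmod (z - g z))\<^sup>2)"
    using partition_integral[OF I Sb dj N cov gi] by simp
  finally show ?thesis by simp
qed

end

definition psi :: "real \<Rightarrow> real" where "psi x = (1 - cos x) / x"
definition psi1 :: "real \<Rightarrow> real" where "psi1 x = (x * sin x - 1 + cos x) / x\<^sup>2"
definition psi2 :: "real \<Rightarrow> real" where "psi2 x = (x\<^sup>2 * cos x - 2 * x * sin x + 2 - 2 * cos x) / x ^ 3"

lemma psi_deriv: "x \<noteq> 0 \<Longrightarrow> (psi has_real_derivative psi1 x) (at x)"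
  unfolding psi_def[abs_def] psi1_def
  by (rule derivative_eq_intros refl | simp)+ (simp add: field_simps power2_eq_square)

lemma psi1_deriv: "x \<noteq> 0 \<Longrightarrow> (psi1 has_real_derivative psi2 x) (at x)"
  unfolding psi1_def[abs_def] psi2_def
  by (rule derivative_eq_intros refl | simp)+ (simp add: field_simps eval_nat_numeral algebra_simps)

lemma h_nonpos:
  assumes "0 \<le> x" "x \<le> pi"
  shows "x\<^sup>2 * cos x - 2 * x * sin x + 2 - 2 * cos x \<le> 0"
proof -
  let ?g = "\<lambda>x. - (x\<^sup>2 * cos x - 2 * x * sin x + 2 - 2 * cos x)"
  have "?g 0 \<le> ?g x"
  proof (rule DERIV_nonneg_imp_nondecreasing[OF assms(1)])
    fix t assume t: "0 \<le> t" "t \<le> x"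
    have "(?g has_real_derivative t\<^sup>2 * sin t) (at t)"
      by (rule derivative_eq_intros refl | simp add: field_simps power2_eq_square)+
    moreover have "t\<^sup>2 * sin t \<ge> 0" using t assms by (intro mult_nonneg_nonneg sin_ge_zero) auto
    ultimately show "\<exists>y. (?g has_real_derivative y) (at t) \<and> 0 \<le> y" by blast
  qed
  then show ?thesis by simp
qed

lemma psi2_nonpos: "0 < x \<Longrightarrow> x \<le> pi \<Longrightarrow> psi2 x \<le> 0"
  unfolding psi2_def using h_nonpos[of x] by (intro divide_nonpos_pos) auto

lemma psi_tangent:
  assumes "0 < x" "x < pi" "0 < y" "y < pi"
  shows "psi y \<le> psi x + psi1 x * (y - x)"
proof -
  have "(- psi1 x) * (y - x) \<le> (- psi y) - (- psi x)"
  proof (rule f''_imp_f'[where C="{0<..<pi}" and f="\<lambda>x. - psi x" and f'="\<lambda>x. - psi1 x" and f''="\<lambda>x. - psi2 x"])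
    show "convex {0<..<pi}" by simp
    show "((\<lambda>x. - psi x) has_real_derivative - psi1 t) (at t)" if "t \<in> {0<..<pi}" for t
      using that by (auto intro!: derivative_eq_intros psi_deriv)
    show "((\<lambda>x. - psi1 x) has_real_derivative - psi2 t) (at t)" if "t \<in> {0<..<pi}" for t
      using that by (auto intro!: derivative_eq_intros psi1_deriv)
    show "0 \<le> - psi2 t" if "t \<in> {0<..<pi}" for t
      using that psi2_nonpos[of t] by auto
  qed (use assms in auto)
  then show ?thesis by (simp add: algebra_simps)
qed

lemma k_nonneg:
  assumes "0 \<le> x" "x \<le> pi"
  shows "0 \<le> 2 - 2 * cos x - x * sin x"
proof -
  have j: "0 \<le> sin t - t * cos t" if "0 \<le> t" "t \<le> pi" for t
  proof -
    let ?j = "\<lambda>t. sin t - t * cos t"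
    have "?j 0 \<le> ?j t"
    proof (rule DERIV_nonneg_imp_nondecreasing[OF that(1)])
      fix u assume u: "0 \<le> u" "u \<le> t"
      have "(?j has_real_derivative u * sin u) (at u)"
        by (rule derivative_eq_intros refl | simp)+
      moreover have "u * sin u \<ge> 0" using u that by (intro mult_nonneg_nonneg sin_ge_zero) auto
      ultimately show "\<exists>y. (?j has_real_derivative y) (at u) \<and> 0 \<le> y" by blast
    qed
    then show ?thesis by simp
  qed
  let ?k = "\<lambda>x. 2 - 2 * cos x - x * sin x"
  have "?k 0 \<le> ?k x"
  proof (rule DERIV_nonneg_imp_nondecreasing[OF assms(1)])
    fix u assume u: "0 \<le> u" "u \<le> x"
    have "(?k has_real_derivative sin u - u * cos u) (at u)"
      by (rule derivative_eq_intros refl | simp add: algebra_simps)+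
    then show "\<exists>y. (?k has_real_derivative y) (at u) \<and> 0 \<le> y" using j[of u] u assms by auto
  qed
  then show ?thesis by simp
qed

lemma psi_origin: "0 < x \<Longrightarrow> x \<le> pi \<Longrightarrow> 0 \<le> psi x - x * psi1 x"
proof -
  assume x: "0 < x" "x \<le> pi"
  have "psi x - x * psi1 x = (2 - 2 * cos x - x * sin x) / x"
    using x by (simp add: psi_def psi1_def field_simps power2_eq_square)
  then show ?thesis using k_nonneg[of x] x by simp
qed

lemma psi_sum_bound:
  fixes w :: "'i \<Rightarrow> real"
  assumes I: "finite I" and cI: "real (card I) \<le> n"
    and w: "\<And>i. i \<in> I \<Longrightarrow> 0 < w i \<and> w i \<le> pi / 2"
    and sw: "(\<Sum>i\<in>I. w i) = 2 * pi"
    and x0: "0 < x0" "x0 \<le> pi / 2" "n * x0 = 2 * pi"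
  shows "(\<Sum>i\<in>I. psi (w i)) \<le> n * psi x0"
proof -
  have "(\<Sum>i\<in>I. psi (w i)) \<le> (\<Sum>i\<in>I. psi x0 + psi1 x0 * (w i - x0))"
  proof (intro sum_mono psi_tangent)
    fix i assume "i \<in> I"
    then show "0 < w i" "w i < pi" using w[of i] pi_gt_zero by linarith+
  qed (use x0 pi_gt_zero in linarith)+
  also have "\<dots> = real (card I) * psi x0 + psi1 x0 * (2 * pi) - real (card I) * x0 * psi1 x0"
    by (simp add: sum.distrib sum_subtractf sum_distrib_left[symmetric] sw algebra_simps)
  also have "\<dots> = real (card I) * (psi x0 - x0 * psi1 x0) + psi1 x0 * (2 * pi)"
    by (simp add: algebra_simps)
  also have "\<dots> \<le> n * (psi x0 - x0 * psi1 x0) + psi1 x0 * (2 * pi)"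
    using cI psi_origin[of x0] x0 by (intro add_right_mono mult_right_mono) auto
  also have "\<dots> = n * psi x0"
    using x0(3) by (simp add: algebra_simps)
  finally show ?thesis .
qed

definition QV :: "complex set" where
  "QV = (\<lambda>(x, y). (complex_of_real x + \<i> * complex_of_real y) / complex_of_real (sqrt 2)) ` ({-1, 0, 1} \<times> {-1, 0, 1})"

lemma finite_QV: "finite QV" by (simp add: QV_def)

lemma Qsign_QV: "Qsign z \<in> QV"
proof -
  have "sgn (Re z) \<in> {-1, 0, 1}" "sgn (Im z) \<in> {-1, 0, 1}"
    by (auto simp: sgn_real_def)
  then show ?thesis unfolding QV_def Qsign_def by force
qed

lemma obs_range: "range (obs M a) \<subseteq> {f. \<forall>x. (x \<in> {..<M} \<longrightarrow> f x \<in> QV) \<and> (x \<notin> {..<M} \<longrightarrow> f x = 0)}"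
  by (auto simp: obs_def Qsign_QV)

lemma finite_obs_range: "finite (range (obs M a))"
  by (rule finite_subset[OF obs_range finite_set_of_finite_funs]) (simp_all add: finite_QV)

lemma Qsign_meas[measurable]: "Qsign \<in> borel_measurable borel"
  unfolding Qsign_def by measurable

lemma obs_pre: "{z. obs M a z = v} \<in> sets borel"
proof (cases "\<forall>m\<ge>M. v m = 0")
  case True
  have "{z. obs M a z = v} = (\<Inter>m\<in>{..<M}. (\<lambda>z. Qsign (a m * z)) -` {v m})"
    using True by (auto simp: obs_def fun_eq_iff)
  also have "\<dots> \<in> sets borel"
  proof (cases "M = 0")
    case True then show ?thesis by simp
  next
    case False
    show ?thesis
    proof (intro sets.finite_INT)
      fix m
      have "(\<lambda>z. Qsign (a m * z)) \<in> borel_measurable borel" by measurable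
      then show "(\<lambda>z. Qsign (a m * z)) -` {v m} \<in> sets borel"
        using measurable_sets[of "\<lambda>z. Qsign (a m * z)" borel borel "{v m}"] by simp
    qed (use False in auto)
  qed
  finally show ?thesis .
next
  case False
  then obtain m where m: "M \<le> m" "v m \<noteq> 0" by auto
  have "{z. obs M a z = v} = {}"
  proof -
    have "obs M a z \<noteq> v" for z
    proof
      assume "obs M a z = v"
      then have "obs M a z m = v m" by simp
      then show False using m by (simp add: obs_def)
    qed
    then show ?thesis by auto
  qed
  then show ?thesis by simp
qed

lemma obs_meas_comp:
  assumes "\<And>v. (\<lambda>z. F v z) \<in> borel_measurable borel"
  shows "(\<lambda>z. F (obs M a z) z) \<in> borel_measurable borel"
proof (rule measurable_compose_countable'[where I="range (obs M a)"])
  show "(\<lambda>z. F v z) \<in> borel_measurable borel" for v by (rule assms)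
  show "obs M a \<in> borel \<rightarrow>\<^sub>M count_space (range (obs M a))"
  proof (subst measurable_count_space_eq2[OF finite_obs_range], safe)
    fix z show "obs M a z \<in> range (obs M a)" by simp
  next
    fix z
    have "obs M a -` {obs M a z} = {y. obs M a y = obs M a z}" by auto
    then show "obs M a -` {obs M a z} \<inter> space borel \<in> sets borel" using obs_pre by simp
  qed
  show "countable (range (obs M a))" using finite_obs_range by (rule countable_finite)
qed

definition crit :: "nat \<Rightarrow> (nat \<Rightarrow> complex) \<Rightarrow> real set" where
  "crit M a = {of_int k * (pi/2) - Arg (a m) | k m. m < M \<and> a m \<noteq> 0}"

lemma crit_shift: "c \<in> crit M a \<Longrightarrow> c + of_int j * (pi/2) \<in> crit M a"
proof -
  assume "c \<in> crit M a"
  then obtain k m where km: "c = of_int k * (pi/2) - Arg (a m)" "m < M" "a m \<noteq> 0"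
    by (auto simp: crit_def)
  show ?thesis unfolding crit_def
    by (intro CollectI exI[of _ "k + j"] exI[of _ m]) (simp add: km algebra_simps)
qed

lemma crit_shift1: "c \<in> crit M a \<Longrightarrow> c + pi/2 \<in> crit M a"
  using crit_shift[of c M a 1] by simp

lemma crit_shift4: "c \<in> crit M a \<Longrightarrow> c + 2 * pi \<in> crit M a"
  using crit_shift[of c M a 4] by simp

lemma crit_bounded_finite: "finite (crit M a \<inter> {x..y})"
proof -
  let ?f = "\<lambda>(k::int, m::nat). of_int k * (pi/2) - Arg (a m)"
  have "crit M a \<inter> {x..y} \<subseteq> ?f ` ({\<lfloor>2 * (x - pi) / pi\<rfloor>..\<lceil>2 * (y + pi) / pi\<rceil>} \<times> {..<M})"
  proof
    fix t assume "t \<in> crit M a \<inter> {x..y}"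
    then obtain k m where t: "t = of_int k * (pi/2) - Arg (a m)" "m < M" "x \<le> t" "t \<le> y"
      by (auto simp: crit_def)
    have A: "- pi < Arg (a m)" "Arg (a m) \<le> pi" using Arg_bounded by auto
    have "2 * (x - pi) / pi < of_int k"
      using t A pi_gt_zero by (simp add: field_simps)
    then have k1: "\<lfloor>2 * (x - pi) / pi\<rfloor> \<le> k" by (simp add: floor_le_iff)
    have "of_int k \<le> 2 * (y + pi) / pi"
      using t A pi_gt_zero by (simp add: field_simps)
    then have k2: "k \<le> \<lceil>2 * (y + pi) / pi\<rceil>" by (simp add: le_ceiling_iff)
    show "t \<in> ?f ` ({\<lfloor>2 * (x - pi) / pi\<rfloor>..\<lceil>2 * (y + pi) / pi\<rceil>} \<times> {..<M})"
      using k1 k2 t by (intro image_eqI[of _ _ "(k, m)"]) auto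
  qed
  then show ?thesis by (rule finite_subset) auto
qed

definition nxtc :: "nat \<Rightarrow> (nat \<Rightarrow> complex) \<Rightarrow> real \<Rightarrow> real" where
  "nxtc M a c = Min (crit M a \<inter> {c<..c + pi/2})"

lemma nxt_props:
  assumes "c \<in> crit M a"
  shows "nxtc M a c \<in> crit M a" "c < nxtc M a c" "nxtc M a c \<le> c + pi/2"
    and "\<And>t. t \<in> crit M a \<Longrightarrow> c < t \<Longrightarrow> nxtc M a c \<le> t"
proof -
  let ?X = "crit M a \<inter> {c<..c + pi/2}"
  have fin: "finite ?X"
    by (rule finite_subset[OF _ crit_bounded_finite[of M a c "c + pi/2"]]) auto
  have mem: "c + pi/2 \<in> ?X" using crit_shift1[OF assms] by simp
  then have ne: "?X \<noteq> {}" by auto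
  have "nxtc M a c \<in> ?X" unfolding nxtc_def using Min_in[OF fin ne] .
  then show "nxtc M a c \<in> crit M a" "c < nxtc M a c" "nxtc M a c \<le> c + pi/2" by auto
  fix t assume t: "t \<in> crit M a" "c < t"
  show "nxtc M a c \<le> t"
  proof (cases "t \<le> c + pi/2")
    case True
    then have "t \<in> ?X" using t by simp
    then show ?thesis unfolding nxtc_def using Min_le[OF fin] by blast
  next
    case False
    then show ?thesis using \<open>nxtc M a c \<in> ?X\<close> by simp
  qed
qed

lemma polar_Arg: "z \<noteq> 0 \<Longrightarrow> z = complex_of_real (cmod z) * cis (Arg z)"
  by (simp add: cis_Arg sgn_div_norm scaleR_conv_of_real field_simps)

lemma crit_zero:
  assumes "m < M" "a m \<noteq> 0" "Re (a m * cis \<theta>) = 0 \<or> Im (a m * cis \<theta>) = 0"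
  shows "\<theta> \<in> crit M a"
proof -
  define A where "A = Arg (a m)"
  have "a m * cis \<theta> = complex_of_real (cmod (a m)) * cis (A + \<theta>)"
    using polar_Arg[OF assms(2)] by (simp add: A_def mult.assoc cis_mult[symmetric])
  then have re: "Re (a m * cis \<theta>) = cmod (a m) * cos (A + \<theta>)"
    and im: "Im (a m * cis \<theta>) = cmod (a m) * sin (A + \<theta>)" by simp_all
  have n0: "cmod (a m) \<noteq> 0" using assms(2) by simp
  show ?thesis
  proof (cases "Re (a m * cis \<theta>) = 0")
    case True
    then have "cos (A + \<theta>) = 0" using re n0 by simp
    then obtain i :: int where "A + \<theta> = of_int i * pi + pi / 2" by (auto simp: cos_zero_iff_int2)
    then have "\<theta> = of_int (2 * i + 1) * (pi / 2) - A" by (simp add: algebra_simps)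
    then show ?thesis using assms unfolding crit_def A_def by blast
  next
    case False
    then have "Im (a m * cis \<theta>) = 0" using assms(3) by simp
    then have "sin (A + \<theta>) = 0" using im n0 by simp
    then obtain i :: int where "A + \<theta> = of_int i * pi" by (auto simp: sin_zero_iff_int2)
    then have "\<theta> = of_int (2 * i) * (pi / 2) - A" by (simp add: algebra_simps)
    then show ?thesis using assms unfolding crit_def A_def by blast
  qed
qed

lemma ivt_sgn:
  fixes f :: "real \<Rightarrow> real"
  assumes "x \<le> y" "continuous_on {x..y} f" "\<And>t. t \<in> {x..y} \<Longrightarrow> f t \<noteq> 0"
  shows "sgn (f x) = sgn (f y)"
proof (rule ccontr)
  assume ne: "sgn (f x) \<noteq> sgn (f y)"
  have fx: "f x \<noteq> 0" "f y \<noteq> 0" using assms by auto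
  show False
  proof (cases "f x < 0")
    case True
    then have "f y > 0" using ne fx by (auto simp: sgn_real_def split: if_splits)
    then obtain t where "t \<ge> x" "t \<le> y" "f t = 0"
      using IVT'[of f x 0 y] True assms by auto
    then show False using assms(3) by auto
  next
    case False
    then have "f x > 0" "f y < 0" using ne fx by (auto simp: sgn_real_def split: if_splits)
    then obtain t where "t \<ge> x" "t \<le> y" "f t = 0"
      using IVT2'[of f y 0 x] assms by auto
    then show False using assms(3) by auto
  qed
qed

lemma sgn_const_arc:
  assumes c: "c \<in> crit M a" and th: "c < \<theta>1" "\<theta>1 \<le> \<theta>2" "\<theta>2 < nxtc M a c"
    and m: "m < M" "a m \<noteq> 0"
  shows "sgn (Re (a m * cis \<theta>1)) = sgn (Re (a m * cis \<theta>2)) \<and>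
         sgn (Im (a m * cis \<theta>1)) = sgn (Im (a m * cis \<theta>2))"
proof -
  have nz: "Re (a m * cis t) \<noteq> 0 \<and> Im (a m * cis t) \<noteq> 0" if t: "t \<in> {\<theta>1..\<theta>2}" for t
  proof (rule ccontr)
    assume "\<not> (Re (a m * cis t) \<noteq> 0 \<and> Im (a m * cis t) \<noteq> 0)"
    then have "t \<in> crit M a" using crit_zero[of m M a t] m by blast
    then have "nxtc M a c \<le> t" using nxt_props(4)[OF c] t th by auto
    then show False using t th by auto
  qed
  have cont: "continuous_on {\<theta>1..\<theta>2} (\<lambda>t. Re (a m * cis t))" "continuous_on {\<theta>1..\<theta>2} (\<lambda>t. Im (a m * cis t))"
    by (intro continuous_intros)+
  show ?thesis
    using ivt_sgn[OF th(2) cont(1)] ivt_sgn[OF th(2) cont(2)] nz by auto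
qed

lemma Qsign_scale: "r > 0 \<Longrightarrow> Qsign (complex_of_real r * w) = Qsign w"
  by (simp add: Qsign_def sgn_mult)

lemma obs_const_arc:
  assumes c: "c \<in> crit M a" and z1: "z1 \<in> sect c (nxtc M a c)" and z2: "z2 \<in> sect c (nxtc M a c)"
  shows "obs M a z1 = obs M a z2"
proof -
  have w: "c < nxtc M a c" "nxtc M a c - c \<le> pi" using nxt_props[OF c] pi_gt_zero by auto
  obtain \<theta>1 where t1: "c < \<theta>1" "\<theta>1 < nxtc M a c" "z1 = complex_of_real (cmod z1) * cis \<theta>1" "cmod z1 > 0"
    using sect_polar[OF z1 w] by blast
  obtain \<theta>2 where t2: "c < \<theta>2" "\<theta>2 < nxtc M a c" "z2 = complex_of_real (cmod z2) * cis \<theta>2" "cmod z2 > 0"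
    using sect_polar[OF z2 w] by blast
  have q: "Qsign (a m * z1) = Qsign (a m * z2)" if m: "m < M" for m
  proof (cases "a m = 0")
    case True then show ?thesis by simp
  next
    case False
    have e1: "a m * z1 = complex_of_real (cmod z1) * (a m * cis \<theta>1)"
      by (subst t1(3)) (simp add: mult_ac)
    have e2: "a m * z2 = complex_of_real (cmod z2) * (a m * cis \<theta>2)"
      by (subst t2(3)) (simp add: mult_ac)
    have "sgn (Re (a m * cis \<theta>1)) = sgn (Re (a m * cis \<theta>2)) \<and>
         sgn (Im (a m * cis \<theta>1)) = sgn (Im (a m * cis \<theta>2))"
    proof (cases "\<theta>1 \<le> \<theta>2")
      case le: True
      then show ?thesis using sgn_const_arc[OF c t1(1) le t2(2) m False] by simp
    next
      case gt: False
      then have ge: "\<theta>2 \<le> \<theta>1" by simp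
      show ?thesis using sgn_const_arc[OF c t2(1) ge t1(2) m False] by simp
    qed
    then have "Qsign (a m * cis \<theta>1) = Qsign (a m * cis \<theta>2)" by (simp add: Qsign_def)
    then show ?thesis unfolding e1 e2 using Qsign_scale t1(4) t2(4) by simp
  qed
  then show ?thesis by (auto simp: obs_def)
qed

definition T0 :: "nat \<Rightarrow> (nat \<Rightarrow> complex) \<Rightarrow> real \<Rightarrow> real set" where
  "T0 M a t0 = crit M a \<inter> {t0..<t0 + 2 * pi}"

lemma finite_T0: "finite (T0 M a t0)"
  unfolding T0_def by (rule finite_subset[OF _ crit_bounded_finite[of M a t0 "t0 + 2 * pi"]]) auto

lemma t0_T0: "t0 \<in> crit M a \<Longrightarrow> t0 \<in> T0 M a t0"
  by (simp add: T0_def)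

lemma card_T0: "card (T0 M a t0) \<le> 4 * M"
proof -
  define L where "L m = \<lceil>2 * (t0 + Arg (a m)) / pi\<rceil>" for m
  let ?B = "\<lambda>m. (\<lambda>k. of_int k * (pi/2) - Arg (a m)) ` {L m..L m + 3}"
  have sub: "T0 M a t0 \<subseteq> (\<Union>m\<in>{..<M}. ?B m)"
  proof
    fix t assume "t \<in> T0 M a t0"
    then obtain k m where t: "t = of_int k * (pi/2) - Arg (a m)" "m < M" "t0 \<le> t" "t < t0 + 2 * pi"
      by (auto simp: T0_def crit_def)
    have "2 * (t0 + Arg (a m)) / pi \<le> of_int k"
      using t pi_gt_zero by (simp add: field_simps)
    then have k1: "L m \<le> k" by (simp add: L_def ceiling_le_iff)
    have "of_int k < 2 * (t0 + Arg (a m)) / pi + 4"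
      using t pi_gt_zero by (simp add: field_simps)
    moreover have "2 * (t0 + Arg (a m)) / pi \<le> of_int (L m)" unfolding L_def by (rule le_of_int_ceiling)
    ultimately have "(of_int k :: real) < of_int (L m + 4)" by simp
    then have k2: "k \<le> L m + 3" by linarith
    show "t \<in> (\<Union>m\<in>{..<M}. ?B m)" using t k1 k2 by (intro UN_I[of m] image_eqI[of _ _ k]) auto
  qed
  have "card (T0 M a t0) \<le> card (\<Union>m\<in>{..<M}. ?B m)"
    by (rule card_mono[OF _ sub]) auto
  also have "\<dots> \<le> (\<Sum>m\<in>{..<M}. card (?B m))" by (rule card_UN_le) simp
  also have "\<dots> \<le> (\<Sum>m\<in>{..<M}. 4)"
  proof (rule sum_mono)
    fix m
    have "card (?B m) \<le> card {L m..L m + 3}" by (rule card_image_le) simp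
    then show "card (?B m) \<le> 4" by simp
  qed
  finally show ?thesis by simp
qed

lemma nxt_le_end:
  assumes t0: "t0 \<in> crit M a" and c: "c \<in> T0 M a t0"
  shows "nxtc M a c \<le> t0 + 2 * pi"
  using c nxt_props(4)[of c M a "t0 + 2 * pi"] crit_shift4[OF t0] by (auto simp: T0_def)

lemma cis_eq_window:
  assumes "cis \<theta>1 = cis \<theta>2" "\<theta>1 < \<theta>2" "\<theta>2 - \<theta>1 < 2 * pi"
  shows False
proof -
  have "cis (\<theta>2 - \<theta>1) = 1" using assms(1) by (simp add: cis_divide[symmetric])
  then have "Re (cis (\<theta>2 - \<theta>1)) = 1" by simp
  then have "cos (\<theta>2 - \<theta>1) = 1" by simp
  then obtain n :: int where n: "\<theta>2 - \<theta>1 = of_int n * 2 * pi" by (auto simp: cos_one_2pi_int)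
  have d: "\<theta>2 - \<theta>1 = of_int n * (2 * pi)" using n by (simp add: mult.assoc)
  have "0 < of_int n * (2 * pi)" "of_int n * (2 * pi) < 1 * (2 * pi)" using d assms(2,3) by linarith+
  then have "(0::real) < of_int n" "(of_int n :: real) < 1" using pi_gt_zero
    by (simp_all add: zero_less_mult_iff mult_less_cancel_right)
  then have "0 < n" "n < 1" by simp_all
  then show False by simp
qed

lemma arcs_disjoint_lt:
  assumes t0: "t0 \<in> crit M a" and c1: "c1 \<in> T0 M a t0" and c2: "c2 \<in> T0 M a t0" and lt: "c1 < c2"
  shows "sect c1 (nxtc M a c1) \<inter> sect c2 (nxtc M a c2) = {}"
proof (rule ccontr)
  assume "\<not> ?thesis"
  then obtain z where z: "z \<in> sect c1 (nxtc M a c1)" "z \<in> sect c2 (nxtc M a c2)" by blast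
  have cc1: "c1 \<in> crit M a" and cc2: "c2 \<in> crit M a" using c1 c2 by (auto simp: T0_def)
  have w1: "c1 < nxtc M a c1" "nxtc M a c1 - c1 \<le> pi" using nxt_props[OF cc1] pi_gt_zero by auto
  have w2: "c2 < nxtc M a c2" "nxtc M a c2 - c2 \<le> pi" using nxt_props[OF cc2] pi_gt_zero by auto
  obtain \<theta>1 where t1: "c1 < \<theta>1" "\<theta>1 < nxtc M a c1" "z = complex_of_real (cmod z) * cis \<theta>1" "cmod z > 0"
    using sect_polar[OF z(1) w1] by blast
  obtain \<theta>2 where t2: "c2 < \<theta>2" "\<theta>2 < nxtc M a c2" "z = complex_of_real (cmod z) * cis \<theta>2"
    using sect_polar[OF z(2) w2] by blast
  have "nxtc M a c1 \<le> c2" using nxt_props(4)[OF cc1 cc2 lt] .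
  moreover have "nxtc M a c2 \<le> t0 + 2 * pi" using nxt_le_end[OF t0 c2] .
  moreover have "t0 \<le> c1" using c1 by (simp add: T0_def)
  moreover have "cis \<theta>1 = cis \<theta>2"
    using t1(3) t2(3) t1(4) by (metis mult_cancel_left of_real_eq_0_iff less_irrefl)
  ultimately show False using cis_eq_window[of \<theta>1 \<theta>2] t1 t2 by linarith
qed

lemma arcs_disjoint:
  assumes t0: "t0 \<in> crit M a" and c1: "c1 \<in> T0 M a t0" and c2: "c2 \<in> T0 M a t0" and ne: "c1 \<noteq> c2"
  shows "sect c1 (nxtc M a c1) \<inter> sect c2 (nxtc M a c2) = {}"
proof (cases "c1 < c2")
  case True then show ?thesis using arcs_disjoint_lt[OF t0 c1 c2] by simp
next
  case False
  then have "c2 < c1" using ne by simp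
  then show ?thesis using arcs_disjoint_lt[OF t0 c2 c1] by blast
qed

lemma arcs_cover:
  assumes t0: "t0 \<in> crit M a" and z: "z \<notin> (\<Union>c\<in>T0 M a t0. line c)"
  shows "\<exists>c\<in>T0 M a t0. z \<in> sect c (nxtc M a c)"
proof -
  have tT: "t0 \<in> T0 M a t0" by (rule t0_T0[OF t0])
  have z0: "z \<noteq> 0"
  proof
    assume "z = 0"
    then have "z \<in> line t0" by (simp add: line_def imr_def)
    then show False using z tT by blast
  qed
  obtain \<theta> where th: "t0 \<le> \<theta>" "\<theta> < t0 + 2 * pi" "z = complex_of_real (cmod z) * cis \<theta>"
    using polar_ex[of t0 z] by blast
  have thn: "\<theta> \<notin> crit M a"
  proof
    assume "\<theta> \<in> crit M a"
    then have "\<theta> \<in> T0 M a t0" using th by (simp add: T0_def)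
    moreover have "z \<in> line \<theta>"
    proof -
      have "imr \<theta> z = imr \<theta> (complex_of_real (cmod z) * cis \<theta>)" using th(3) by (rule arg_cong)
      then show ?thesis by (simp add: line_def Im_rot_polar)
    qed
    ultimately show False using z by blast
  qed
  define S where "S = T0 M a t0 \<inter> {..\<theta>}"
  have Sf: "finite S" using finite_T0 by (simp add: S_def)
  have Sne: "S \<noteq> {}" using tT th by (auto simp: S_def)
  define c where "c = Max S"
  have cS: "c \<in> S" unfolding c_def using Max_in[OF Sf Sne] .
  then have cT: "c \<in> T0 M a t0" and cle: "c \<le> \<theta>" by (auto simp: S_def)
  have cc: "c \<in> crit M a" using cT by (simp add: T0_def)
  have clt: "c < \<theta>" using cle thn cc by (cases "c = \<theta>") auto
  have nxt_gt: "\<theta> < nxtc M a c"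
  proof (rule ccontr)
    assume "\<not> \<theta> < nxtc M a c"
    then have le: "nxtc M a c \<le> \<theta>" by simp
    have "nxtc M a c \<in> T0 M a t0"
      using nxt_props[OF cc] le th cT by (auto simp: T0_def)
    then have "nxtc M a c \<in> S" using le by (simp add: S_def)
    then have "nxtc M a c \<le> c" unfolding c_def using Max_ge[OF Sf] by blast
    then show False using nxt_props(2)[OF cc] by simp
  qed
  have "z \<in> sect c (nxtc M a c)"
  proof -
    have "complex_of_real (cmod z) * cis \<theta> \<in> sect c (nxtc M a c)"
      using nxt_props[OF cc] clt nxt_gt z0 pi_gt_zero by (intro polar_in_sect) auto
    then show ?thesis using th(3) by simp
  qed
  then show ?thesis using cT by blast
qed

lemma equi_cis: "equi_pilot M m = cis (pi * real m / (2 * real M))"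
  by (simp add: equi_pilot_def cis_conv_exp)

lemma equi_nz: "equi_pilot M m \<noteq> 0" by (simp add: equi_pilot_def)

lemma Arg_equi:
  assumes "m < M"
  shows "Arg (equi_pilot M m) = pi * real m / (2 * real M)"
proof (rule Arg_unique[of 1])
  show "complex_of_real 1 * exp (\<i> * complex_of_real (pi * real m / (2 * real M))) = equi_pilot M m"
    by (simp add: equi_pilot_def)
  have "real m / real M < 1" using assms by simp
  then have "pi * real m / (2 * real M) \<le> pi / 2"
    using assms pi_gt_zero by (simp add: field_simps)
  then show "pi * real m / (2 * real M) \<le> pi" using pi_gt_zero by linarith
  have "0 \<le> pi * real m / (2 * real M)" by simp
  then show "- pi < pi * real m / (2 * real M)" using pi_gt_zero by linarith
qed simp

lemma crit_equi:
  assumes M: "M \<ge> 1"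
  shows "crit M (equi_pilot M) = range (\<lambda>j::int. of_int j * (pi / (2 * real M)))"
proof (intro set_eqI iffI)
  fix t assume "t \<in> crit M (equi_pilot M)"
  then obtain k m where t: "t = of_int k * (pi/2) - Arg (equi_pilot M m)" "m < M"
    by (auto simp: crit_def)
  then have "t = of_int (k * int M - int m) * (pi / (2 * real M))"
    using M by (simp add: Arg_equi field_simps)
  then show "t \<in> range (\<lambda>j::int. of_int j * (pi / (2 * real M)))" by blast
next
  fix t assume "t \<in> range (\<lambda>j::int. of_int j * (pi / (2 * real M)))"
  then obtain j :: int where t: "t = of_int j * (pi / (2 * real M))" by blast
  define m' where "m' = (- j) mod int M"
  define k where "k = (j + m') div int M"
  have m'0: "0 \<le> m'" "m' < int M" using M by (simp_all add: m'_def)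
  have "(j + m') mod int M = 0" by (simp add: m'_def mod_add_right_eq)
  then have "int M dvd (j + m')" by (simp add: dvd_eq_mod_eq_0)
  then have "k * int M = j + m'" unfolding k_def by (rule dvd_div_mult_self)
  then have jk: "j = k * int M - m'" by simp
  define m where "m = nat m'"
  have mM: "m < M" using m'0 by (simp add: m_def)
  have rm: "real m = of_int m'" using m'0 by (simp add: m_def)
  have "t = of_int k * (pi/2) - Arg (equi_pilot M m)"
    using M m'0 by (simp add: t jk Arg_equi[OF mM] rm field_simps)
  then show "t \<in> crit M (equi_pilot M)"
    unfolding crit_def using mM equi_nz by blast
qed

lemma nxtc_equi:
  assumes M: "M \<ge> 1"
  shows "nxtc M (equi_pilot M) (of_int j * (pi / (2 * real M))) = of_int (j + 1) * (pi / (2 * real M))"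
proof -
  let ?d = "pi / (2 * real M)"
  have d0: "?d > 0" using M by simp
  have c: "of_int j * ?d \<in> crit M (equi_pilot M)" using crit_equi[OF M] by blast
  have c1: "of_int (j + 1) * ?d \<in> crit M (equi_pilot M)" using crit_equi[OF M] by blast
  have lt: "of_int j * ?d < of_int (j + 1) * ?d" using d0 by (intro mult_strict_right_mono) auto
  have le: "nxtc M (equi_pilot M) (of_int j * ?d) \<le> of_int (j + 1) * ?d"
    using nxt_props(4)[OF c c1 lt] .
  have "nxtc M (equi_pilot M) (of_int j * ?d) \<in> crit M (equi_pilot M)"
    and gt: "of_int j * ?d < nxtc M (equi_pilot M) (of_int j * ?d)" using nxt_props[OF c] by auto
  then obtain j' :: int where j': "nxtc M (equi_pilot M) (of_int j * ?d) = of_int j' * ?d"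
    using crit_equi[OF M] by auto
  from gt have "of_int j * ?d < of_int j' * ?d" unfolding j' .
  then have "(of_int j :: real) < of_int j'" by (rule mult_right_less_imp_less) (use d0 in simp)
  then have "j < j'" by simp
  then have "of_int (j + 1) * ?d \<le> of_int j' * ?d" using d0 by (intro mult_right_mono) auto
  then show ?thesis using le j' by simp
qed

lemma T0_equi:
  assumes M: "M \<ge> 1"
  shows "T0 M (equi_pilot M) 0 = (\<lambda>j. real j * (pi / (2 * real M))) ` {..<4 * M}"
proof (intro set_eqI iffI)
  let ?d = "pi / (2 * real M)"
  have d0: "?d > 0" using M by simp
  have d4: "real (4 * M) * ?d = 2 * pi" using M by (simp add: field_simps)
  fix t
  assume "t \<in> T0 M (equi_pilot M) 0"
  then obtain j :: int where t: "t = of_int j * ?d" "0 \<le> t" "t < 2 * pi"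
    using crit_equi[OF M] by (auto simp: T0_def)
  have "0 \<le> j"
  proof (rule ccontr)
    assume "\<not> 0 \<le> j"
    then have "of_int j * ?d < 0" using d0 by (intro mult_neg_pos) auto
    then show False using t by linarith
  qed
  moreover have "of_int j * ?d < real (4 * M) * ?d" using t(1,3) d4 by linarith
  then have "(of_int j :: real) < real (4 * M)" by (rule mult_right_less_imp_less) (use d0 in simp)
  then have "j < int (4 * M)" by simp
  ultimately show "t \<in> (\<lambda>j. real j * ?d) ` {..<4 * M}"
    using t by (intro image_eqI[of _ _ "nat j"]) auto
next
  let ?d = "pi / (2 * real M)"
  have d0: "?d > 0" using M by simp
  have d4: "real (4 * M) * ?d = 2 * pi" using M by (simp add: field_simps)
  fix t assume "t \<in> (\<lambda>j. real j * ?d) ` {..<4 * M}"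
  then obtain j where j: "j < 4 * M" "t = real j * ?d" by auto
  have "t \<in> crit M (equi_pilot M)" using crit_equi[OF M] j by (auto intro!: image_eqI[of _ _ "int j"])
  moreover have "real j * ?d < real (4 * M) * ?d" using j d0 by (intro mult_strict_right_mono) auto
  ultimately show "t \<in> T0 M (equi_pilot M) 0" using j d4 by (simp add: T0_def)
qed

lemma card_T0_equi:
  assumes M: "M \<ge> 1"
  shows "card (T0 M (equi_pilot M) 0) = 4 * M"
proof -
  have "inj_on (\<lambda>j. real j * (pi / (2 * real M))) {..<4 * M}"
    using M by (intro inj_onI) simp
  then show ?thesis unfolding T0_equi[OF M] by (simp add: card_image)
qed

definition sc :: "int \<Rightarrow> real" where "sc \<rho> = (if \<rho> = 0 \<or> \<rho> = 3 then 1 else -1)"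
definition ss :: "int \<Rightarrow> real" where "ss \<rho> = (if \<rho> \<le> 1 then 1 else -1)"

lemma quad_sgn:
  assumes "of_int q * (pi/2) < \<phi>" "\<phi> < of_int (q + 1) * (pi/2)"
  shows "sgn (cos \<phi>) = sc (q mod 4) \<and> sgn (sin \<phi>) = ss (q mod 4)"
proof -
  define n where "n = q div 4"
  define \<rho> where "\<rho> = q mod 4"
  have q: "q = 4 * n + \<rho>" by (simp add: n_def \<rho>_def)
  have \<rho>: "0 \<le> \<rho>" "\<rho> < 4" by (simp_all add: \<rho>_def)
  define \<phi>' where "\<phi>' = \<phi> - of_int n * (2 * pi)"
  have "cis \<phi> = cis \<phi>' * cis (2 * pi * of_int n)"
    by (simp add: cis_mult \<phi>'_def algebra_simps)
  also have "cis (2 * pi * of_int n) = 1" by (rule cis_multiple_2pi) simp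
  finally have eq: "cis \<phi> = cis \<phi>'" by simp
  have cs: "cos \<phi> = cos \<phi>'" "sin \<phi> = sin \<phi>'"
    using arg_cong[where f=Re, OF eq] arg_cong[where f=Im, OF eq] by simp_all
  have b: "of_int \<rho> * (pi/2) < \<phi>'" "\<phi>' < of_int (\<rho> + 1) * (pi/2)"
    using assms unfolding q \<phi>'_def by (simp_all add: algebra_simps)
  have "\<rho> = 0 \<or> \<rho> = 1 \<or> \<rho> = 2 \<or> \<rho> = 3" using \<rho> by auto
  then show ?thesis
  proof (elim disjE)
    assume r: "\<rho> = 0"
    have "0 < cos \<phi>'" using b r pi_gt_zero by (intro cos_gt_zero_pi) auto
    moreover have "0 < sin \<phi>'" using b r pi_gt_zero by (intro sin_gt_zero) auto
    ultimately show ?thesis using r cs by (simp add: \<rho>_def[symmetric] sc_def ss_def)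
  next
    assume r: "\<rho> = 1"
    have "cos \<phi>' < 0"
    proof -
      have "sin (pi/2 - \<phi>') < 0" using b r by (intro sin_neg_of) auto
      then show ?thesis by (simp add: sin_cos_eq)
    qed
    moreover have "0 < sin \<phi>'" using b r pi_gt_zero by (intro sin_gt_zero) auto
    ultimately show ?thesis using r cs by (simp add: \<rho>_def[symmetric] sc_def ss_def)
  next
    assume r: "\<rho> = 2"
    have "cos \<phi>' < 0"
    proof -
      have "sin (pi/2 - \<phi>') < 0" using b r by (intro sin_neg_of) auto
      then show ?thesis by (simp add: sin_cos_eq)
    qed
    moreover have "sin \<phi>' < 0" using b r pi_gt_zero by (intro sin_lt_zero) auto
    ultimately show ?thesis using r cs by (simp add: \<rho>_def[symmetric] sc_def ss_def)
  next
    assume r: "\<rho> = 3"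
    have "0 < cos \<phi>'"
    proof -
      have "0 < cos (\<phi>' - 2 * pi)" using b r by (intro cos_gt_zero_pi) auto
      then show ?thesis using cos_periodic[of "\<phi>' - 2 * pi"] by simp
    qed
    moreover have "sin \<phi>' < 0" using b r pi_gt_zero by (intro sin_lt_zero) auto
    ultimately show ?thesis using r cs by (simp add: \<rho>_def[symmetric] sc_def ss_def)
  qed
qed

lemma Qsign_quad:
  assumes "r > 0" "of_int q * (pi/2) < \<phi>" "\<phi> < of_int (q + 1) * (pi/2)"
  shows "Qsign (complex_of_real r * cis \<phi>) = (complex_of_real (sc (q mod 4)) + \<i> * complex_of_real (ss (q mod 4))) / complex_of_real (sqrt 2)"
  using quad_sgn[OF assms(2,3)] assms(1) by (simp add: Qsign_def sgn_mult)

lemma sc_ss_inj: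
  assumes "0 \<le> \<rho>" "\<rho> < 4" "0 \<le> \<rho>'" "\<rho>' < 4" "\<rho> \<noteq> \<rho>'"
  shows "(complex_of_real (sc \<rho>) + \<i> * complex_of_real (ss \<rho>)) / complex_of_real (sqrt 2)
       \<noteq> (complex_of_real (sc \<rho>') + \<i> * complex_of_real (ss \<rho>')) / complex_of_real (sqrt 2)"
proof
  assume "(complex_of_real (sc \<rho>) + \<i> * complex_of_real (ss \<rho>)) / complex_of_real (sqrt 2)
       = (complex_of_real (sc \<rho>') + \<i> * complex_of_real (ss \<rho>')) / complex_of_real (sqrt 2)"
  then have "complex_of_real (sc \<rho>) + \<i> * complex_of_real (ss \<rho>) = complex_of_real (sc \<rho>') + \<i> * complex_of_real (ss \<rho>')"
    by simp
  then have "sc \<rho> = sc \<rho>'" "ss \<rho> = ss \<rho>'" by (simp_all add: complex_eq_iff)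
  moreover have "\<rho> \<in> {0,1,2,3}" "\<rho>' \<in> {0,1,2,3}" using assms by auto
  ultimately show False using assms(5) by (auto simp: sc_def ss_def)
qed

definition V :: "int \<Rightarrow> complex" where
  "V \<rho> = (complex_of_real (sc \<rho>) + \<i> * complex_of_real (ss \<rho>)) / complex_of_real (sqrt 2)"

lemma Qsign_equi_arc:
  assumes M: "M \<ge> 1"
    and z: "z \<in> sect (real j * (pi / (2 * real M))) (real (Suc j) * (pi / (2 * real M)))"
    and m: "m < M"
  shows "Qsign (equi_pilot M m * z) = V (int (((j + m) div M) mod 4))"
proof -
  define d where "d = pi / (2 * real M)"
  have d0: "d > 0" using M by (simp add: d_def)
  have Md: "real M * d = pi / 2" using M by (simp add: d_def)
  have w: "real j * d < real (Suc j) * d" "real (Suc j) * d - real j * d \<le> pi"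
    using d0 M by (simp_all add: algebra_simps d_def field_simps)
  obtain \<theta> where th: "real j * d < \<theta>" "\<theta> < real (Suc j) * d" "z = complex_of_real (cmod z) * cis \<theta>" "cmod z > 0"
    using sect_polar[OF z[folded d_def] w] by blast
  have e: "equi_pilot M m * z = complex_of_real (cmod z) * cis (\<theta> + real m * d)"
  proof -
    have "equi_pilot M m = cis (real m * d)" by (simp add: equi_cis d_def field_simps)
    then show ?thesis by (subst th(3)) (simp add: cis_mult[symmetric] mult_ac)
  qed
  define q where "q = (j + m) div M"
  have qe: "q * M + (j + m) mod M = j + m" unfolding q_def by (rule div_mult_mod_eq)
  have qm: "(j + m) mod M < M" using M by simp
  have q1: "q * M \<le> j + m" using qe by linarith
  have q2: "j + m < (q + 1) * M" using qe qm by simp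
  have r1: "real (q * M) \<le> real (j + m)" using q1 by linarith
  have r2: "real (j + m) + 1 \<le> real ((q + 1) * M)" using q2 by linarith
  have lo: "of_int (int q) * (pi/2) < \<theta> + real m * d"
  proof -
    have "of_int (int q) * (pi/2) = real (q * M) * d" by (simp add: Md[symmetric] mult_ac)
    also have "\<dots> \<le> real (j + m) * d" using r1 d0 by (intro mult_right_mono) auto
    also have "\<dots> < \<theta> + real m * d" using th(1) by (simp add: algebra_simps)
    finally show ?thesis .
  qed
  have hi: "\<theta> + real m * d < of_int (int q + 1) * (pi/2)"
  proof -
    have "\<theta> + real m * d < (real (j + m) + 1) * d" using th(2) by (simp add: algebra_simps)
    also have "\<dots> \<le> real ((q + 1) * M) * d" using r2 d0 by (intro mult_right_mono) auto
    also have "\<dots> = of_int (int q + 1) * (pi/2)" by (simp add: Md[symmetric] algebra_simps)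
    finally show ?thesis .
  qed
  have "Qsign (equi_pilot M m * z) = V (int q mod 4)"
    unfolding e V_def by (rule Qsign_quad[OF th(4) lo hi])
  then show ?thesis by (simp add: q_def zmod_int)
qed

lemma V_inj:
  assumes "\<rho> < 4" "\<rho>' < 4" "\<rho> \<noteq> \<rho>'"
  shows "V (int \<rho>) \<noteq> V (int \<rho>')"
  unfolding V_def using assms by (intro sc_ss_inj) auto

lemma equi_decode_lt:
  assumes M: "M \<ge> 1" and j: "j1 < j2" "j2 < 4 * M"
    and z1: "z1 \<in> sect (real j1 * (pi / (2 * real M))) (real (Suc j1) * (pi / (2 * real M)))"
    and z2: "z2 \<in> sect (real j2 * (pi / (2 * real M))) (real (Suc j2) * (pi / (2 * real M)))"
  shows "obs M (equi_pilot M) z1 \<noteq> obs M (equi_pilot M) z2"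
proof -
  have ex: "\<exists>m<M. ((j1 + m) div M) mod 4 \<noteq> ((j2 + m) div M) mod 4"
  proof (cases "j1 div M = j2 div M")
    case False
    have "j1 div M < 4" "j2 div M < 4" using j M by (simp_all add: div_less_iff_less_mult)
    then have "(j1 div M) mod 4 \<noteq> (j2 div M) mod 4" using False by simp
    then show ?thesis using M by (intro exI[of _ 0]) auto
  next
    case True
    define Q where "Q = j1 div M"
    have s: "j1 = Q * M + j1 mod M" "j2 = Q * M + j2 mod M"
      using True div_mult_mod_eq[of j1 M] div_mult_mod_eq[of j2 M] by (simp_all add: Q_def)
    have smod: "j1 mod M < M" "j2 mod M < M" using M by simp_all
    have slt: "j1 mod M < j2 mod M" using s j(1) by linarith
    define m where "m = M - j2 mod M"
    have mM: "m < M" using slt smod by (simp add: m_def)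
    have d1: "(j1 + m) div M = Q"
    proof (rule div_nat_eqI)
      show "M * Q \<le> j1 + m" using s by (simp add: mult.commute)
      show "j1 + m < M * Suc Q" using s slt smod by (simp add: m_def algebra_simps)
    qed
    have d2: "(j2 + m) div M = Q + 1"
    proof -
      have "j2 + m = (Q + 1) * M" using s smod by (simp add: m_def algebra_simps)
      then show ?thesis using M by simp
    qed
    have "Q mod 4 \<noteq> (Q + 1) mod 4" by presburger
    then show ?thesis using d1 d2 mM by (intro exI[of _ m]) auto
  qed
  then obtain m where m: "m < M" "((j1 + m) div M) mod 4 \<noteq> ((j2 + m) div M) mod 4" by blast
  have "obs M (equi_pilot M) z1 m = V (int (((j1 + m) div M) mod 4))"
    using Qsign_equi_arc[OF M z1 m(1)] m(1) by (simp add: obs_def)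
  moreover have "obs M (equi_pilot M) z2 m = V (int (((j2 + m) div M) mod 4))"
    using Qsign_equi_arc[OF M z2 m(1)] m(1) by (simp add: obs_def)
  moreover have "V (int (((j1 + m) div M) mod 4)) \<noteq> V (int (((j2 + m) div M) mod 4))"
    using m(2) by (intro V_inj) auto
  ultimately show ?thesis by metis
qed

lemma equi_decode:
  assumes M: "M \<ge> 1" and j: "j1 < 4 * M" "j2 < 4 * M"
    and z1: "z1 \<in> sect (real j1 * (pi / (2 * real M))) (real (Suc j1) * (pi / (2 * real M)))"
    and z2: "z2 \<in> sect (real j2 * (pi / (2 * real M))) (real (Suc j2) * (pi / (2 * real M)))"
    and eq: "obs M (equi_pilot M) z1 = obs M (equi_pilot M) z2"
  shows "j1 = j2"
proof (rule ccontr)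
  assume "j1 \<noteq> j2"
  then consider "j1 < j2" | "j2 < j1" by linarith
  then show False
  proof cases
    case 1 then show False using equi_decode_lt[OF M 1 j(2) z1 z2] eq by simp
  next
    case 2 then show False using equi_decode_lt[OF M 2 j(1) z2 z1] eq by simp
  qed
qed

context rotmeas
begin

definition Kc :: real where "Kc = pi * (cmod (Gw (pi/2)))\<^sup>2 / (2 * mw (pi/2))"

lemma Kc_nonneg: "Kc \<ge> 0"
  unfolding Kc_def using mw_nonneg[of "pi/2"] by simp

lemma cmod_1_cis: "(cmod (1 - cis w))\<^sup>2 = 2 - 2 * cos w"
proof -
  have "(cmod (1 - cis w))\<^sup>2 = (1 - cos w)\<^sup>2 + (sin w)\<^sup>2" by (simp add: cmod_power2)
  also have "\<dots> = 2 - 2 * cos w" using sin_cos_squared_add[of w] by (simp add: power2_eq_square algebra_simps)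
  finally show ?thesis .
qed

lemma Phi_sect:
  assumes w: "0 < w" "w \<le> pi / 2"
  shows "Phi (sect \<alpha> (\<alpha> + w)) = Kc * psi w"
proof -
  have g: "(cmod (Gw w))\<^sup>2 = (cmod (Gw (pi/2)))\<^sup>2 * (1 - cos w)"
  proof -
    have "(cmod (Gw w * (1 - \<i>)))\<^sup>2 = (cmod (Gw (pi/2) * (1 - cis w)))\<^sup>2" using Gw_formula[OF w] by simp
    then have "(cmod (Gw w))\<^sup>2 * (cmod (1 - \<i>))\<^sup>2 = (cmod (Gw (pi/2)))\<^sup>2 * (cmod (1 - cis w))\<^sup>2"
      by (simp only: norm_mult power_mult_distrib)
    moreover have "(cmod (1 - \<i>))\<^sup>2 = 2" by (simp add: cmod_power2)
    ultimately show ?thesis by (simp add: cmod_1_cis algebra_simps)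
  qed
  have "Phi (sect \<alpha> (\<alpha> + w)) = (cmod (Gw w))\<^sup>2 / mw w"
    by (simp add: Phi_def sect_Gw sect_mw norm_mult)
  also have "\<dots> = (cmod (Gw (pi/2)))\<^sup>2 * (1 - cos w) / ((2 * w / pi) * mw (pi/2))"
    using g mw_linear[OF w] by simp
  also have "\<dots> = Kc * psi w"
    using w pi_gt_zero by (simp add: Kc_def psi_def field_simps)
  finally show ?thesis .
qed

lemma cme_bounded: "\<exists>B. \<forall>z. cmod (cme \<mu> M a (obs M a z)) \<le> B"
proof -
  let ?S = "cme \<mu> M a ` range (obs M a)"
  have "finite ?S" using finite_obs_range by simp
  then obtain B where "\<forall>x\<in>?S. cmod x \<le> B" using finite_imp_bounded bounded_iff by blast
  then show ?thesis by auto
qed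

lemma int_mse: "integrable \<mu> (\<lambda>z. (cmod (z - cme \<mu> M a (obs M a z)))\<^sup>2)"
proof -
  obtain B where B: "\<And>z. cmod (cme \<mu> M a (obs M a z)) \<le> B" using cme_bounded by blast
  show ?thesis
  proof (rule Bochner_Integration.integrable_bound)
    show "integrable \<mu> (\<lambda>z. 2 * (cmod z)\<^sup>2 + 2 * B\<^sup>2)" using int2 by simp
    have "(\<lambda>z. (cmod (z - cme \<mu> M a (obs M a z)))\<^sup>2) \<in> borel_measurable borel"
      by (rule obs_meas_comp[where F="\<lambda>v z. (cmod (z - cme \<mu> M a v))\<^sup>2"]) simp
    then show "(\<lambda>z. (cmod (z - cme \<mu> M a (obs M a z)))\<^sup>2) \<in> borel_measurable \<mu>"
      by (simp add: measurable_cong_sets[OF sets_mu refl])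
    show "AE z in \<mu>. norm ((cmod (z - cme \<mu> M a (obs M a z)))\<^sup>2) \<le> norm (2 * (cmod z)\<^sup>2 + 2 * B\<^sup>2)"
    proof (intro AE_I2)
      fix z
      let ?c = "cme \<mu> M a (obs M a z)"
      have b0: "0 \<le> B" using B[of z] norm_ge_zero order_trans by blast
      have "cmod (z - ?c) \<le> cmod z + B" using norm_triangle_ineq4[of z ?c] B[of z] by linarith
      then have "(cmod (z - ?c))\<^sup>2 \<le> (cmod z + B)\<^sup>2" by (simp add: power_mono)
      also have "\<dots> \<le> 2 * (cmod z)\<^sup>2 + 2 * B\<^sup>2"
        using sum_squares_bound[of "cmod z" B] by (simp add: power2_eq_square algebra_simps)
      finally show "norm ((cmod (z - ?c))\<^sup>2) \<le> norm (2 * (cmod z)\<^sup>2 + 2 * B\<^sup>2)" using b0 by simp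
    qed
  qed
qed

end

lemma T0e_elem:
  assumes M: "M \<ge> 1" and c: "c \<in> T0 M (equi_pilot M) 0"
  obtains j where "j < 4 * M" "c = real j * (pi / (2 * real M))"
    "nxtc M (equi_pilot M) c = real (Suc j) * (pi / (2 * real M))"
proof -
  obtain j where j: "j < 4 * M" "c = real j * (pi / (2 * real M))"
    using c T0_equi[OF M] by auto
  have "nxtc M (equi_pilot M) c = real (Suc j) * (pi / (2 * real M))"
    using nxtc_equi[OF M, of "int j"] j by simp
  then show ?thesis using that j by blast
qed

context rotmeas
begin

lemma arc_facts:
  assumes t0: "t0 \<in> crit M a"
  shows "finite (T0 M a t0)"
    and "\<And>c. sect c (nxtc M a c) \<in> sets borel"
    and "\<And>c1 c2. c1 \<in> T0 M a t0 \<Longrightarrow> c2 \<in> T0 M a t0 \<Longrightarrow> c1 \<noteq> c2 \<Longrightarrow> sect c1 (nxtc M a c1) \<inter> sect c2 (nxtc M a c2) = {}"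
    and "(\<Union>c\<in>T0 M a t0. line c) \<in> null_sets \<mu>"
    and "\<And>z. z \<notin> (\<Union>c\<in>T0 M a t0. line c) \<Longrightarrow> \<exists>c\<in>T0 M a t0. z \<in> sect c (nxtc M a c)"
proof -
  show "finite (T0 M a t0)" by (rule finite_T0)
  show "sect c (nxtc M a c) \<in> sets borel" for c by simp
  show "sect c1 (nxtc M a c1) \<inter> sect c2 (nxtc M a c2) = {}" if "c1 \<in> T0 M a t0" "c2 \<in> T0 M a t0" "c1 \<noteq> c2" for c1 c2
    using arcs_disjoint[OF t0 that] .
  show "(\<Union>c\<in>T0 M a t0. line c) \<in> null_sets \<mu>"
    using finite_T0 by (intro null_sets_UN' countable_finite line_null)
  show "\<exists>c\<in>T0 M a t0. z \<in> sect c (nxtc M a c)" if "z \<notin> (\<Union>c\<in>T0 M a t0. line c)" for z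
    using arcs_cover[OF t0 that] .
qed

lemma mse_lower_a:
  assumes t0: "t0 \<in> crit M a"
  shows "(LINT z|\<mu>. (cmod z)\<^sup>2) - (\<Sum>c\<in>T0 M a t0. Phi (sect c (nxtc M a c))) \<le> mse \<mu> M a"
proof -
  note af = arc_facts[OF t0]
  define g where "g z = cme \<mu> M a (obs M a z)" for z
  define cst where "cst c = g (SOME z. z \<in> sect c (nxtc M a c))" for c
  have gc: "g z = cst c" if c: "c \<in> T0 M a t0" and z: "z \<in> sect c (nxtc M a c)" for c z
  proof -
    have cc: "c \<in> crit M a" using c by (simp add: T0_def)
    have "(SOME z. z \<in> sect c (nxtc M a c)) \<in> sect c (nxtc M a c)" using z by (rule someI)
    then have "obs M a z = obs M a (SOME z. z \<in> sect c (nxtc M a c))"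
      using obs_const_arc[OF cc z] by simp
    then show ?thesis by (simp add: g_def cst_def)
  qed
  have "(LINT z|\<mu>. (cmod z)\<^sup>2) - (\<Sum>c\<in>T0 M a t0. Phi (sect c (nxtc M a c))) \<le> (LINT z|\<mu>. (cmod (z - g z))\<^sup>2)"
    by (rule mse_lower[OF af(1) af(2) af(3) af(4) af(5)]) (use int_mse gc in \<open>auto simp: g_def\<close>)
  then show ?thesis by (simp add: mse_def g_def)
qed

lemma total_measure:
  assumes t0: "t0 \<in> crit M a"
  shows "measure \<mu> UNIV = (\<Sum>c\<in>T0 M a t0. measure \<mu> (sect c (nxtc M a c)))"
proof -
  note af = arc_facts[OF t0]
  have "(LINT z|\<mu>. (1::real)) = (\<Sum>c\<in>T0 M a t0. LINT z|\<mu>. indicator (sect c (nxtc M a c)) z * 1)"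
    by (rule partition_integral[OF af(1) af(2) af(3) af(4) af(5)])
       (auto intro: finite_measure.integrable_const[OF finite_measureI[OF fin]])
  then show ?thesis by (simp add: sets_mu)
qed

lemma cme_equi:
  assumes M: "M \<ge> 1" and c: "c \<in> T0 M (equi_pilot M) 0" and z: "z \<in> sect c (nxtc M (equi_pilot M) c)"
  shows "cme \<mu> M (equi_pilot M) (obs M (equi_pilot M) z)
       = GS (sect c (nxtc M (equi_pilot M) c)) / complex_of_real (measure \<mu> (sect c (nxtc M (equi_pilot M) c)))"
proof -
  let ?e = "equi_pilot M"
  let ?S = "\<lambda>c. sect c (nxtc M ?e c)"
  let ?N = "\<Union>c\<in>T0 M ?e 0. line c"
  have t0: "0 \<in> crit M ?e" using crit_equi[OF M] by (auto intro!: image_eqI[of _ _ 0])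
  note af = arc_facts[OF t0]
  define A where "A = {y. obs M ?e y = obs M ?e z}"
  have cc: "c \<in> crit M ?e" using c by (simp add: T0_def)
  obtain j where j: "j < 4 * M" "c = real j * (pi / (2 * real M))" "nxtc M ?e c = real (Suc j) * (pi / (2 * real M))"
    using T0e_elem[OF M c] by blast
  have ae: "AE y in \<mu>. (y \<in> A) = (y \<in> ?S c)"
  proof (rule AE_I'[OF af(4)])
    show "{y \<in> space \<mu>. \<not> ((y \<in> A) = (y \<in> ?S c))} \<subseteq> ?N"
    proof
      fix y assume "y \<in> {y \<in> space \<mu>. \<not> ((y \<in> A) = (y \<in> ?S c))}"
      then have ne: "(y \<in> A) \<noteq> (y \<in> ?S c)" by simp
      show "y \<in> ?N"
      proof (rule ccontr)
        assume yN: "y \<notin> ?N"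
        show False
        proof (cases "y \<in> A")
          case True
          then have yS: "y \<notin> ?S c" using ne by simp
          obtain c' where c': "c' \<in> T0 M ?e 0" "y \<in> ?S c'" using af(5)[OF yN] by blast
          obtain j' where j': "j' < 4 * M" "c' = real j' * (pi / (2 * real M))" "nxtc M ?e c' = real (Suc j') * (pi / (2 * real M))"
            using T0e_elem[OF M c'(1)] by blast
          have "obs M ?e y = obs M ?e z" using True by (simp add: A_def)
          moreover have "y \<in> sect (real j' * (pi / (2 * real M))) (real (Suc j') * (pi / (2 * real M)))"
            using c'(2) j' by simp
          moreover have "z \<in> sect (real j * (pi / (2 * real M))) (real (Suc j) * (pi / (2 * real M)))"
            using z j by simp
          ultimately have "j' = j" using equi_decode[OF M j'(1) j(1)] by blast
          then show False using yS c' j j' by simp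
        next
          case False
          then have yS: "y \<in> ?S c" using ne by simp
          have "obs M ?e y = obs M ?e z" using obs_const_arc[OF cc yS z] .
          then show False using False by (simp add: A_def)
        qed
      qed
    qed
  qed
  have Ab: "A \<in> sets borel" unfolding A_def by (rule obs_pre)
  have m: "measure \<mu> A = measure \<mu> (?S c)"
    by (rule measure_eq_AE[OF ae]) (simp_all add: sets_mu Ab)
  have i: "(LINT y|\<mu>. indicator A y *\<^sub>R y) = GS (?S c)"
    unfolding GS_def
  proof (rule integral_cong_AE)
    show "(\<lambda>y. indicator A y *\<^sub>R y) \<in> borel_measurable \<mu>" using Ab by (simp add: sets_mu)
    show "(\<lambda>y. indicator (?S c) y *\<^sub>R y) \<in> borel_measurable \<mu>" by (simp add: sets_mu)
    show "AE y in \<mu>. indicator A y *\<^sub>R y = indicator (?S c) y *\<^sub>R y"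
      using ae by eventually_elim (simp add: indicator_def)
  qed
  show ?thesis unfolding cme_def using m i by (simp add: A_def)
qed

lemma sect_equi_eq:
  assumes M: "M \<ge> 1" and c: "c \<in> T0 M (equi_pilot M) 0"
  shows "nxtc M (equi_pilot M) c = c + pi / (2 * real M)"
proof -
  obtain j where j: "c = real j * (pi / (2 * real M))" "nxtc M (equi_pilot M) c = real (Suc j) * (pi / (2 * real M))"
    using T0e_elem[OF M c] by blast
  then show ?thesis by (simp add: algebra_simps add_divide_distrib)
qed

lemma mse_equi:
  assumes M: "M \<ge> 1"
  shows "mse \<mu> M (equi_pilot M) = (LINT z|\<mu>. (cmod z)\<^sup>2) - real (4 * M) * (Kc * psi (pi / (2 * real M)))"
proof -
  let ?e = "equi_pilot M"
  have t0: "0 \<in> crit M ?e" using crit_equi[OF M] by (auto intro!: image_eqI[of _ _ 0])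
  note af = arc_facts[OF t0]
  have d: "0 < pi / (2 * real M)" "pi / (2 * real M) \<le> pi / 2" using M by (simp_all add: field_simps)
  have "mse \<mu> M ?e = (LINT z|\<mu>. (cmod z)\<^sup>2) - (\<Sum>c\<in>T0 M ?e 0. Phi (sect c (nxtc M ?e c)))"
    unfolding mse_def
    by (rule mse_eq[OF af(1) af(2) af(3) af(4) af(5) int_mse]) (auto intro: cme_equi[OF M])
  also have "(\<Sum>c\<in>T0 M ?e 0. Phi (sect c (nxtc M ?e c))) = (\<Sum>c\<in>T0 M ?e 0. Kc * psi (pi / (2 * real M)))"
    by (intro sum.cong refl) (simp add: sect_equi_eq[OF M] Phi_sect[OF d])
  also have "\<dots> = real (4 * M) * (Kc * psi (pi / (2 * real M)))"
    using card_T0_equi[OF M] by simp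
  finally show ?thesis .
qed

lemma measure_UNIV_4: "measure \<mu> UNIV = 4 * mw (pi/2)"
proof -
  have M: "(1::nat) \<ge> 1" by simp
  have t0: "0 \<in> crit 1 (equi_pilot 1)" using crit_equi[OF M] by (auto intro!: image_eqI[of _ _ 0])
  have "measure \<mu> UNIV = (\<Sum>c\<in>T0 1 (equi_pilot 1) 0. measure \<mu> (sect c (nxtc 1 (equi_pilot 1) c)))"
    by (rule total_measure[OF t0])
  also have "\<dots> = (\<Sum>c\<in>T0 1 (equi_pilot 1) 0. mw (pi/2))"
  proof (intro sum.cong refl)
    fix c assume c: "c \<in> T0 1 (equi_pilot 1) 0"
    have "nxtc 1 (equi_pilot 1) c = c + pi / (2 * real (1::nat))" by (rule sect_equi_eq[OF M c])
    then have e: "nxtc 1 (equi_pilot 1) c = c + pi / 2" by simp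
    show "measure \<mu> (sect c (nxtc 1 (equi_pilot 1) c)) = mw (pi/2)" unfolding e by (rule sect_mw)
  qed
  also have "\<dots> = 4 * mw (pi/2)" using card_T0_equi[OF M] by simp
  finally show ?thesis .
qed

end

theorem theorem4:
  fixes K M :: nat and p s2 :: "nat \<Rightarrow> real" and a :: "nat \<Rightarrow> complex"
  assumes "\<forall>k<K. p k > 0"
    and "(\<Sum>k<K. p k) = 1"
    and "\<forall>k<K. s2 k > 0"
    and "(\<Sum>m<M. (cmod (a m))^2) = real M"
  shows "mse (gm_measure K p s2) M (equi_pilot M) \<le> mse (gm_measure K p s2) M a"
proof -
  interpret R: rotmeas "gm_measure K p s2" using gm_rotmeas assms(1,3) by blast
  show ?thesis
  proof (cases "M = 0")
    case True
    have "obs M a = obs M (equi_pilot M)" using True by (auto simp: obs_def fun_eq_iff)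
    then have "mse (gm_measure K p s2) M a = mse (gm_measure K p s2) M (equi_pilot M)"
      by (simp add: mse_def cme_def)
    then show ?thesis by simp
  next
    case False
    then have M: "M \<ge> 1" by simp
    obtain m0 where m0: "m0 < M" "a m0 \<noteq> 0"
    proof (rule ccontr)
      assume "\<not> thesis"
      then have "\<forall>m<M. a m = 0" using that by blast
      then have "(\<Sum>m<M. (cmod (a m))^2) = 0" by simp
      then show False using assms(4) False by simp
    qed
    define t0 where "t0 = of_int 0 * (pi/2) - Arg (a m0)"
    have t0: "t0 \<in> crit M a" unfolding t0_def crit_def using m0 by blast
    define I where "I = T0 M a t0"
    define w where "w c = nxtc M a c - c" for c
    define d where "d = pi / (2 * real M)"
    have d: "0 < d" "d \<le> pi / 2" "real (4 * M) * d = 2 * pi" using M by (simp_all add: d_def field_simps)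
    have wc: "0 < w c \<and> w c \<le> pi / 2" if "c \<in> I" for c
      using nxt_props[of c M a] that by (auto simp: w_def I_def T0_def)
    have phi: "R.Phi (sect c (nxtc M a c)) = R.Kc * psi (w c)" if "c \<in> I" for c
    proof -
      have "sect c (nxtc M a c) = sect c (c + w c)" by (simp add: w_def)
      then show ?thesis using R.Phi_sect[of "w c" c] wc[OF that] by simp
    qed
    let ?E = "LINT z|gm_measure K p s2. (cmod z)\<^sup>2"
    have low: "?E - R.Kc * (\<Sum>c\<in>I. psi (w c)) \<le> mse (gm_measure K p s2) M a"
      using R.mse_lower_a[OF t0] phi by (simp add: I_def sum_distrib_left)
    have eq: "mse (gm_measure K p s2) M (equi_pilot M) = ?E - real (4 * M) * (R.Kc * psi d)"
      using R.mse_equi[OF M] by (simp add: d_def)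
    have key: "R.Kc * (\<Sum>c\<in>I. psi (w c)) \<le> real (4 * M) * (R.Kc * psi d)"
    proof (cases "R.mw (pi/2) = 0")
      case True
      then have "R.Kc = 0" by (simp add: R.Kc_def)
      then show ?thesis by simp
    next
      case False
      then have mpos: "R.mw (pi/2) > 0" using R.mw_nonneg[of "pi/2"] by simp
      have "measure (gm_measure K p s2) UNIV = (\<Sum>c\<in>I. measure (gm_measure K p s2) (sect c (nxtc M a c)))"
        unfolding I_def by (rule R.total_measure[OF t0])
      also have "\<dots> = (\<Sum>c\<in>I. (2 * w c / pi) * R.mw (pi/2))"
      proof (intro sum.cong refl)
        fix c assume c: "c \<in> I"
        have "sect c (nxtc M a c) = sect c (c + w c)" by (simp add: w_def)
        then show "measure (gm_measure K p s2) (sect c (nxtc M a c)) = (2 * w c / pi) * R.mw (pi/2)"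
          using R.sect_mw[of c "w c"] R.mw_linear[of "w c"] wc[OF c] by simp
      qed
      also have "\<dots> = (2 / pi) * R.mw (pi/2) * (\<Sum>c\<in>I. w c)"
        by (simp add: sum_distrib_left sum_distrib_right sum_divide_distrib mult_ac)
      finally have "4 * R.mw (pi/2) = (2 / pi) * R.mw (pi/2) * (\<Sum>c\<in>I. w c)"
        using R.measure_UNIV_4 by simp
      then have sw: "(\<Sum>c\<in>I. w c) = 2 * pi" using mpos pi_gt_zero by (simp add: field_simps)
      have cI: "real (card I) \<le> real (4 * M)" using card_T0[of M a t0] by (simp add: I_def)
      have "(\<Sum>c\<in>I. psi (w c)) \<le> real (4 * M) * psi d"
        using psi_sum_bound[OF _ cI wc sw d] by (simp add: I_def finite_T0)
      then show ?thesis using R.Kc_nonneg by (simp add: mult_left_mono mult.left_commute)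
    qed
    show ?thesis using low eq key by linarith
  qed
qed


end
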